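(* Let $(X,b,m)$ be a weighted graph satisfying the standing assumptions (C), (B), (M). Let $D\subsetneq X$ be $d_L$-relatively dense, let $\alpha>0$ and $r\in[1,\infty]$. Then there exist $T>0$ and $K\ge 0$ such that the linear control problem $(H,D)$ is $(\alpha,T,r,K)$-controllable.
   Context: A weighted graph $(X,b,m)$ consists of a countable set $X$, a function $m\colon X\to(0,\infty)$ (extended to a measure by $m(A)=\sum_{x\in A}m(x)$), and a symmetric $b\colon X\times X\to[0,\infty)$ with $b(x,x)=0$ and $\sum_{y}b(x,y)<\infty$ for all $x$. A path is a finite sequence $(x_0,\dots,x_k)$ with $b(x_j,x_{j+1})>0$ for all $j$. Standing assumptions: (C) $(X,b,m)$ is connected (any two distinct points are joined by a path); (B) $D_{\max}:=\sup_{x\in X}\operatorname{Deg}(x)<\infty$ where $\operatorname{Deg}(x)=\frac{1}{m(x)}\sum_{y}b(x,y)$; (M) $\sup_x m(x)<\infty$. The length of a path $\gamma=(x_0,\dots,x_k)$ is $L(\gamma)=\sum_{j=0}^{k-1}1/b(x_j,x_{j+1})$, and the length metric is $d_L(x,y)=\inf\{L(\gamma):\gamma \text{ path from } x \text{ to } y\}$ for $x\ne y$, $d_L(x,x)=0$. For a metric $d$, $B_R(x)=\{y:d(x,y)\le R\}$; $D\subseteq X$ is $d$-relatively dense if $\inf\{R>0:\bigcup_{x\in D}B_R(x)=X\}<\infty$. The weighted Laplacian on $\ell_2(X,m)$ (inner product $\langle f,g\rangle=\sum_x f(x)\overline{g(x)}m(x)$) is the bounded non-negative self-adjoint operator $Hf(x)=\frac{1}{m(x)}\sum_y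 b(x,y)(f(x)-f(y))$, and $S_t=e^{-tH}$. For $D\subseteq X$, $\mathbf 1_D\colon\ell_2(D,m|_D)\to\ell_2(X,m)$ is extension by zero. The control problem $(H,D)$ is $\dot f(t)=-Hf(t)+\mathbf 1_Du(t)$, $f(0)=f_0\in\ell_2(X,m)$, with mild solution $f(t)=S_tf_0+\int_0^tS_{t-\tau}\mathbf 1_Du(\tau)\,d\tau$. For $T>0$, $\alpha,K\ge0$, $r\in[1,\infty]$, $(H,D)$ is $(\alpha,T,r,K)$-controllable if for every $f_0\in\ell_2(X,m)$ there is $u\in L_r((0,T);\ell_2(D,m|_D))$ (extended by zero) with $\|u\|_{L_r((0,T);\ell_2(D,m|_D))}\le K\|f_0\|$ and $\|f(T)\|\le\alpha\|f_0\|$. *)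

theory Defs
  imports "HOL-Analysis.Analysis" "HOL-Probability.Essential_Supremum"
begin

text \<open>Only the values of b and m on X matter.\<close>

definition weighted_graph :: "'a set \<Rightarrow> ('a \<Rightarrow> 'a \<Rightarrow> real) \<Rightarrow> ('a \<Rightarrow> real) \<Rightarrow> bool" where
  "weighted_graph X b m \<longleftrightarrow>
     countable X \<and>
     (\<forall>x\<in>X. 0 < m x) \<and>
     (\<forall>x\<in>X. \<forall>y\<in>X. 0 \<le> b x y \<and> b x y = b y x) \<and>
     (\<forall>x\<in>X. b x x = 0) \<and>
     (\<forall>x\<in>X. (\<lambda>y. b x y) summable_on X)"

definition is_path :: "'a set \<Rightarrow> ('a \<Rightarrow> 'a \<Rightarrow> real) \<Rightarrow> 'a list \<Rightarrow> bool" where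
  "is_path X b xs \<longleftrightarrow> xs \<noteq> [] \<and> set xs \<subseteq> X \<and>
     (\<forall>i. Suc i < length xs \<longrightarrow> 0 < b (xs ! i) (xs ! Suc i))"

definition path_from_to :: "'a set \<Rightarrow> ('a \<Rightarrow> 'a \<Rightarrow> real) \<Rightarrow> 'a \<Rightarrow> 'a \<Rightarrow> 'a list \<Rightarrow> bool" where
  "path_from_to X b x y xs \<longleftrightarrow> is_path X b xs \<and> hd xs = x \<and> last xs = y"

definition graph_connected :: "'a set \<Rightarrow> ('a \<Rightarrow> 'a \<Rightarrow> real) \<Rightarrow> bool" where
  "graph_connected X b \<longleftrightarrow>
     (\<forall>x\<in>X. \<forall>y\<in>X. x \<noteq> y \<longrightarrow> (\<exists>xs. path_from_to X b x y xs))"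

definition Deg :: "'a set \<Rightarrow> ('a \<Rightarrow> 'a \<Rightarrow> real) \<Rightarrow> ('a \<Rightarrow> real) \<Rightarrow> 'a \<Rightarrow> real" where
  "Deg X b m x = (\<Sum>\<^sub>\<infinity>y\<in>X. b x y) / m x"

definition bounded_degree :: "'a set \<Rightarrow> ('a \<Rightarrow> 'a \<Rightarrow> real) \<Rightarrow> ('a \<Rightarrow> real) \<Rightarrow> bool" where
  "bounded_degree X b m \<longleftrightarrow> (\<exists>C. \<forall>x\<in>X. Deg X b m x \<le> C)"

definition bounded_measure :: "'a set \<Rightarrow> ('a \<Rightarrow> real) \<Rightarrow> bool" where
  "bounded_measure X m \<longleftrightarrow> (\<exists>C. \<forall>x\<in>X. m x \<le> C)"

definition path_length :: "('a \<Rightarrow> 'a \<Rightarrow> real) \<Rightarrow> 'a list \<Rightarrow> real" where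
  "path_length b xs = (\<Sum>i<length xs - 1. 1 / b (xs ! i) (xs ! Suc i))"

definition dL :: "'a set \<Rightarrow> ('a \<Rightarrow> 'a \<Rightarrow> real) \<Rightarrow> 'a \<Rightarrow> 'a \<Rightarrow> real" where
  "dL X b x y = (if x = y then 0
                 else Inf {path_length b xs | xs. path_from_to X b x y xs})"

definition closed_ball_in :: "'a set \<Rightarrow> ('a \<Rightarrow> 'a \<Rightarrow> real) \<Rightarrow> 'a \<Rightarrow> real \<Rightarrow> 'a set" where
  "closed_ball_in X d x R = {y\<in>X. d x y \<le> R}"

text \<open>D is d-relatively dense iff inf{R>0 : union of R-balls around D covers X} < oo,
  i.e. iff some R > 0 works.\<close>
definition relatively_dense :: "'a set \<Rightarrow> ('a \<Rightarrow> 'a \<Rightarrow> real) \<Rightarrow> 'a set \<Rightarrow> bool" where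
  "relatively_dense X d D \<longleftrightarrow> (\<exists>R>0. (\<Union>x\<in>D. closed_ball_in X d x R) = X)"

definition enn_powr :: "ennreal \<Rightarrow> real \<Rightarrow> ennreal" where
  "enn_powr x p = (if x = \<infinity> then \<infinity> else ennreal (enn2real x powr p))"

text \<open>Norm of f in l2(A, m|A) (value oo if f is not in l2).\<close>
definition l2norm :: "('a \<Rightarrow> real) \<Rightarrow> 'a set \<Rightarrow> ('a \<Rightarrow> complex) \<Rightarrow> ennreal" where
  "l2norm m A f = enn_powr (\<integral>\<^sup>+x. ennreal (m x * (cmod (f x))\<^sup>2) \<partial>count_space A) (1/2)"

definition in_l2 :: "('a \<Rightarrow> real) \<Rightarrow> 'a set \<Rightarrow> ('a \<Rightarrow> complex) \<Rightarrow> bool" where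
  "in_l2 m A f \<longleftrightarrow> l2norm m A f < \<infinity>"

definition Lap :: "'a set \<Rightarrow> ('a \<Rightarrow> 'a \<Rightarrow> real) \<Rightarrow> ('a \<Rightarrow> real) \<Rightarrow> ('a \<Rightarrow> complex) \<Rightarrow> 'a \<Rightarrow> complex" where
  "Lap X b m f = (\<lambda>x. complex_of_real (1 / m x) *
                        (\<Sum>\<^sub>\<infinity>y\<in>X. complex_of_real (b x y) * (f x - f y)))"

text \<open>S_t = exp(-tH), given (H bounded) by the norm-convergent exponential series;
  evaluated pointwise (point evaluations are continuous on l2).\<close>
definition heat_sg :: "'a set \<Rightarrow> ('a \<Rightarrow> 'a \<Rightarrow> real) \<Rightarrow> ('a \<Rightarrow> real) \<Rightarrow> real \<Rightarrow> ('a \<Rightarrow> complex) \<Rightarrow> 'a \<Rightarrow> complex" where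
  "heat_sg X b m t f = (\<lambda>x. \<Sum>n. complex_of_real ((- t) ^ n / fact n) * ((Lap X b m ^^ n) f) x)"

definition ext0 :: "'a set \<Rightarrow> ('a \<Rightarrow> complex) \<Rightarrow> 'a \<Rightarrow> complex" where
  "ext0 D v = (\<lambda>x. if x \<in> D then v x else 0)"

text \<open>Mild solution f(t) = S_t f0 + int_0^t S_(t-tau) 1_D u(tau) dtau
  (the l2-valued Bochner integral, evaluated pointwise).\<close>
definition mild_sol :: "'a set \<Rightarrow> ('a \<Rightarrow> 'a \<Rightarrow> real) \<Rightarrow> ('a \<Rightarrow> real) \<Rightarrow> 'a set \<Rightarrow>
    ('a \<Rightarrow> complex) \<Rightarrow> (real \<Rightarrow> 'a \<Rightarrow> complex) \<Rightarrow> real \<Rightarrow> 'a \<Rightarrow> complex" where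
  "mild_sol X b m D f0 u t = (\<lambda>x. heat_sg X b m t f0 x +
      (LINT \<tau>:{0<..<t}|lborel. heat_sg X b m (t - \<tau>) (ext0 D (u \<tau>)) x))"

definition Lr_norm :: "ennreal \<Rightarrow> real \<Rightarrow> (real \<Rightarrow> ennreal) \<Rightarrow> ennreal" where
  "Lr_norm r T g =
     (if r = \<infinity> then esssup (restrict_space lborel {0<..<T}) g
      else enn_powr (\<integral>\<^sup>+\<tau>\<in>{0<..<T}. enn_powr (g \<tau>) (enn2real r) \<partial>lborel) (1 / enn2real r))"

text \<open>A control u in L_r((0,T); l2(D,m|D)) is
  represented by u : real => 'a => complex, whose values are read only on D and (0,T);
  (strong) measurability is measurability of every coordinate (l2(D) is separable),
  and finiteness of the L_r norm is implied by the required bound.\<close>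
definition controllable :: "'a set \<Rightarrow> ('a \<Rightarrow> 'a \<Rightarrow> real) \<Rightarrow> ('a \<Rightarrow> real) \<Rightarrow> 'a set \<Rightarrow>
    real \<Rightarrow> real \<Rightarrow> ennreal \<Rightarrow> real \<Rightarrow> bool" where
  "controllable X b m D \<alpha> T r K \<longleftrightarrow>
     (\<forall>f0. in_l2 m X f0 \<longrightarrow>
        (\<exists>u :: real \<Rightarrow> 'a \<Rightarrow> complex.
           (\<forall>x\<in>D. (\<lambda>\<tau>. u \<tau> x) \<in> borel_measurable lborel) \<and>
           Lr_norm r T (\<lambda>\<tau>. l2norm m D (u \<tau>)) \<le> ennreal K * l2norm m X f0 \<and>
           l2norm m X (mild_sol X b m D f0 u T) \<le> ennreal \<alpha> * l2norm m X f0))"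

end

theory Submission
  imports Defs
begin

typedef 'a L2 = "{f :: 'a \<Rightarrow> complex. (\<lambda>x. (cmod (f x))\<^sup>2) summable_on UNIV}"
  morphisms vec Abs_L2
  by (rule exI[of _ "\<lambda>_. 0"]) auto

setup_lifting type_definition_L2

lemma L2_sq_summable: "(\<lambda>x. (cmod (vec g x))\<^sup>2) summable_on A"
  using vec[of g] summable_on_subset_banach by blast

lemma sq_sum_le: "(a+b)\<^sup>2 \<le> 2*a\<^sup>2 + 2*(b::real)\<^sup>2"
proof -
  have "0 \<le> (a-b)\<^sup>2" by simp
  thus ?thesis by (simp add: power2_eq_square algebra_simps)
qed

lemma prod_le_sq: "a*b \<le> (1/2)*a\<^sup>2 + (1/2)*(b::real)\<^sup>2"
proof -
  have "0 \<le> (a-b)\<^sup>2" by simp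
  thus ?thesis by (simp add: power2_eq_square algebra_simps)
qed

lemma L2_add_closed:
  assumes "(\<lambda>x. (cmod (f x))\<^sup>2) summable_on A" "(\<lambda>x. (cmod (g x))\<^sup>2) summable_on A"
  shows "(\<lambda>x. (cmod (f x + g x))\<^sup>2) summable_on A"
proof -
  have "(\<lambda>x. 2 * (cmod (f x))\<^sup>2 + 2 * (cmod (g x))\<^sup>2) summable_on A"
    using assms by (intro summable_on_add summable_on_cmult_right) auto
  moreover have "(cmod (f x + g x))\<^sup>2 \<le> 2 * (cmod (f x))\<^sup>2 + 2 * (cmod (g x))\<^sup>2" for x
  proof -
    have "cmod (f x + g x) \<le> cmod (f x) + cmod (g x)" by (rule norm_triangle_ineq)
    hence "(cmod (f x + g x))\<^sup>2 \<le> (cmod (f x) + cmod (g x))\<^sup>2"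
      by (simp add: power_mono)
    also have "\<dots> \<le> 2 * (cmod (f x))\<^sup>2 + 2 * (cmod (g x))\<^sup>2"
      by (rule sq_sum_le)
    finally show ?thesis .
  qed
  ultimately show ?thesis
    by (rule summable_on_comparison_test) auto
qed

lemma L2_scale_closed:
  assumes "(\<lambda>x. (cmod (f x))\<^sup>2) summable_on A"
  shows "(\<lambda>x. (cmod (c * f x))\<^sup>2) summable_on A"
  using summable_on_cmult_right[OF assms, of "(cmod c)\<^sup>2"]
  by (simp add: norm_mult power_mult_distrib)

instantiation L2 :: (type) real_vector
begin
lift_definition zero_L2 :: "'a L2" is "\<lambda>_. 0" by simp
lift_definition plus_L2 :: "'a L2 \<Rightarrow> 'a L2 \<Rightarrow> 'a L2" is "\<lambda>f g x. f x + g x"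
  using L2_add_closed by auto
lift_definition uminus_L2 :: "'a L2 \<Rightarrow> 'a L2" is "\<lambda>f x. - f x" by simp
lift_definition minus_L2 :: "'a L2 \<Rightarrow> 'a L2 \<Rightarrow> 'a L2" is "\<lambda>f g x. f x - g x"
proof -
  fix f g :: "'a \<Rightarrow> complex"
  assume "(\<lambda>x. (cmod (f x))\<^sup>2) summable_on UNIV" "(\<lambda>x. (cmod (g x))\<^sup>2) summable_on UNIV"
  hence "(\<lambda>x. (cmod (f x + (- g x)))\<^sup>2) summable_on UNIV"
    by (intro L2_add_closed) auto
  thus "(\<lambda>x. (cmod (f x - g x))\<^sup>2) summable_on UNIV" by simp
qed
lift_definition scaleR_L2 :: "real \<Rightarrow> 'a L2 \<Rightarrow> 'a L2" is "\<lambda>r f x. complex_of_real r * f x"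
  using L2_scale_closed by blast
instance
  by standard (transfer; auto simp: algebra_simps fun_eq_iff)+
end

lemma vec_zero[simp]: "vec 0 = (\<lambda>_. 0)" by transfer simp
lemma vec_plus[simp]: "vec (f + g) x = vec f x + vec g x" by transfer simp
lemma vec_minus[simp]: "vec (f - g) x = vec f x - vec g x" by transfer simp
lemma vec_uminus[simp]: "vec (- f) x = - vec f x" by transfer simp
lemma vec_scaleR[simp]: "vec (r *\<^sub>R f) x = complex_of_real r * vec f x" by transfer simp
lemma vec_sum: "vec (sum F A) x = (\<Sum>i\<in>A. vec (F i) x)"
  by (induction A rule: infinite_finite_induct) auto

lemma L2_eqI: "(\<And>x. vec f x = vec g x) \<Longrightarrow> f = g"
  by (metis vec_inject ext)

lemma L2_prod_summable:
  "(\<lambda>x. Re (vec f x * cnj (vec g x))) summable_on A"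
proof -
  have S: "(\<lambda>x. (1/2) * (cmod (vec f x))\<^sup>2 + (1/2) * (cmod (vec g x))\<^sup>2) summable_on A"
    by (intro summable_on_add summable_on_cmult_right L2_sq_summable)
  have bnd: "norm (Re (vec f x * cnj (vec g x))) \<le> (1/2) * (cmod (vec f x))\<^sup>2 + (1/2) * (cmod (vec g x))\<^sup>2" for x
  proof -
    have "norm (Re (vec f x * cnj (vec g x))) \<le> cmod (vec f x * cnj (vec g x))"
      unfolding real_norm_def by (rule abs_Re_le_cmod)
    also have "\<dots> = cmod (vec f x) * cmod (vec g x)" by (simp add: norm_mult)
    also have "\<dots> \<le> (1/2) * (cmod (vec f x))\<^sup>2 + (1/2) * (cmod (vec g x))\<^sup>2"
      by (rule prod_le_sq)
    finally show ?thesis .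
  qed
  have "(\<lambda>x. norm (Re (vec f x * cnj (vec g x)))) summable_on A"
    apply (rule summable_on_comparison_test[OF S])
     apply (rule bnd)
    apply (rule norm_ge_zero)
    done
  thus ?thesis by (rule abs_summable_summable)
qed

instantiation L2 :: (type) real_inner
begin
definition inner_L2 :: "'a L2 \<Rightarrow> 'a L2 \<Rightarrow> real" where
  "inner_L2 f g = (\<Sum>\<^sub>\<infinity>x. Re (vec f x * cnj (vec g x)))"
definition norm_L2 :: "'a L2 \<Rightarrow> real" where
  "norm_L2 f = sqrt (\<Sum>\<^sub>\<infinity>x. (cmod (vec f x))\<^sup>2)"
definition dist_L2 :: "'a L2 \<Rightarrow> 'a L2 \<Rightarrow> real" where
  "dist_L2 f g = norm (f - g)"
definition sgn_L2 :: "'a L2 \<Rightarrow> 'a L2" where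
  "sgn_L2 f = f /\<^sub>R norm f"
definition uniformity_L2 :: "('a L2 \<times> 'a L2) filter" where
  "uniformity_L2 = (INF e\<in>{0<..}. principal {(x, y). dist x y < e})"
definition open_L2 :: "'a L2 set \<Rightarrow> bool" where
  "open_L2 U \<longleftrightarrow> (\<forall>x\<in>U. \<forall>\<^sub>F (x', y) in uniformity. x' = x \<longrightarrow> y \<in> U)"
instance
proof
  fix x y z :: "'a L2" and r :: real
  show "dist x y = norm (x - y)" by (simp add: dist_L2_def)
  show "sgn x = x /\<^sub>R norm x" by (simp add: sgn_L2_def)
  show "(uniformity :: ('a L2 \<times> 'a L2) filter) = (INF e\<in>{0<..}. principal {(x, y). dist x y < e})"
    by (simp add: uniformity_L2_def)
  show "open U \<longleftrightarrow> (\<forall>x\<in>U. \<forall>\<^sub>F (x', y) in uniformity. x' = x \<longrightarrow> y \<in> U)" for U :: "'a L2 set"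
    by (simp add: open_L2_def)
  show "inner x y = inner y x"
    unfolding inner_L2_def
    by (rule infsum_cong) (simp add: mult.commute)
  have e1: "(\<lambda>xa. Re (vec (x+y) xa * cnj (vec z xa))) = (\<lambda>xa. Re (vec x xa * cnj (vec z xa)) + Re (vec y xa * cnj (vec z xa)))"
    by (simp add: fun_eq_iff algebra_simps)
  show "inner (x + y) z = inner x z + inner y z"
    unfolding inner_L2_def e1 by (rule infsum_add) (rule L2_prod_summable)+
  have e2: "(\<lambda>xa. Re (vec (r *\<^sub>R x) xa * cnj (vec y xa))) = (\<lambda>xa. r * Re (vec x xa * cnj (vec y xa)))"
    by (simp add: fun_eq_iff algebra_simps)
  show "inner (r *\<^sub>R x) y = r * inner x y"
    unfolding inner_L2_def e2 by (rule infsum_cmult_right) (rule L2_prod_summable)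
  have eq: "Re (vec x z * cnj (vec x z)) = (cmod (vec x z))\<^sup>2" for z
    by (simp add: complex_norm_square[symmetric])
  show "0 \<le> inner x x"
    unfolding inner_L2_def eq by (rule infsum_nonneg) auto
  show "inner x x = 0 \<longleftrightarrow> x = 0"
  proof
    assume "inner x x = 0"
    hence "(\<Sum>\<^sub>\<infinity>z. (cmod (vec x z))\<^sup>2) = 0" unfolding inner_L2_def eq .
    hence "(cmod (vec x z))\<^sup>2 = 0" for z
      using nonneg_infsum_le_0D[OF _ L2_sq_summable[of x UNIV], of z] by auto
    thus "x = 0" by (intro L2_eqI) simp
  qed (simp add: inner_L2_def)
  show "norm x = sqrt (inner x x)"
    unfolding inner_L2_def norm_L2_def eq ..
qed
end

lemma norm_L2_sq: "(norm f)\<^sup>2 = (\<Sum>\<^sub>\<infinity>x. (cmod (vec f x))\<^sup>2)"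
  unfolding norm_L2_def by (simp add: infsum_nonneg)

lemma coord_le_norm: "cmod (vec f x) \<le> norm f"
proof -
  have "(\<Sum>z\<in>{x}. (cmod (vec f z))\<^sup>2) \<le> (\<Sum>\<^sub>\<infinity>z. (cmod (vec f z))\<^sup>2)"
    by (rule finite_sum_le_infsum) (auto simp: L2_sq_summable)
  hence "(cmod (vec f x))\<^sup>2 \<le> (norm f)\<^sup>2" by (simp add: norm_L2_sq)
  thus ?thesis by (simp add: power2_le_iff_abs_le)
qed

lemma bounded_linear_vec: "bounded_linear (\<lambda>f. vec f x)"
  by (rule bounded_linear_intro[of _ 1]) (auto simp: coord_le_norm scaleR_conv_of_real)

lemma continuous_vec[continuous_intros]:
  "continuous_on S F \<Longrightarrow> continuous_on S (\<lambda>t. vec (F t) x)"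
  using bounded_linear.continuous_on[OF bounded_linear_vec[of x]] by blast

lemma finite_sum_le_norm:
  assumes "finite A" shows "(\<Sum>x\<in>A. (cmod (vec f x))\<^sup>2) \<le> (norm f)\<^sup>2"
  unfolding norm_L2_sq by (rule finite_sum_le_infsum) (auto simp: L2_sq_summable assms)

instance L2 :: (type) banach
proof
  fix F :: "nat \<Rightarrow> 'a L2"
  assume C: "Cauchy F"
  have cx: "Cauchy (\<lambda>n. vec (F n) x)" for x
  proof (rule CauchyI)
    fix e :: real assume "e > 0"
    then obtain N where N: "\<forall>m\<ge>N. \<forall>n\<ge>N. norm (F m - F n) < e"
      using CauchyD[OF C] by blast
    show "\<exists>M. \<forall>m\<ge>M. \<forall>n\<ge>M. norm (vec (F m) x - vec (F n) x) < e"
      using N coord_le_norm[of "F _ - F _" x] by (metis order.strict_trans1 vec_minus)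
  qed
  define G where "G x = lim (\<lambda>n. vec (F n) x)" for x
  have G: "(\<lambda>n. vec (F n) x) \<longlonglongrightarrow> G x" for x
    unfolding G_def using cx Cauchy_convergent_iff convergent_LIMSEQ_iff by blast
  have main: "\<exists>N. \<forall>n\<ge>N. (\<lambda>x. (cmod (G x - vec (F n) x))\<^sup>2) summable_on UNIV \<and>
      (\<Sum>\<^sub>\<infinity>x. (cmod (G x - vec (F n) x))\<^sup>2) \<le> e\<^sup>2" if e: "e > 0" for e
  proof -
    obtain N where N: "\<forall>m\<ge>N. \<forall>n\<ge>N. norm (F m - F n) < e"
      using CauchyD[OF C e] by blast
    have fin: "(\<Sum>x\<in>A. (cmod (G x - vec (F n) x))\<^sup>2) \<le> e\<^sup>2" if "finite A" "n \<ge> N" for A n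
    proof -
      have lim: "(\<lambda>k. \<Sum>x\<in>A. (cmod (vec (F k) x - vec (F n) x))\<^sup>2) \<longlonglongrightarrow> (\<Sum>x\<in>A. (cmod (G x - vec (F n) x))\<^sup>2)"
        by (intro tendsto_intros G)
      have "(\<Sum>x\<in>A. (cmod (vec (F k) x - vec (F n) x))\<^sup>2) \<le> e\<^sup>2" if "k \<ge> N" for k
      proof -
        have "(\<Sum>x\<in>A. (cmod (vec (F k) x - vec (F n) x))\<^sup>2) \<le> (norm (F k - F n))\<^sup>2"
          using finite_sum_le_norm[OF \<open>finite A\<close>, of "F k - F n"] by simp
        also have "\<dots> \<le> e\<^sup>2" using N that \<open>n \<ge> N\<close>
          by (intro power_mono) (auto simp: less_imp_le)
        finally show ?thesis .
      qed
      thus ?thesis using lim by (intro LIMSEQ_le_const2[OF lim]) auto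
    qed
    have "(\<lambda>x. (cmod (G x - vec (F n) x))\<^sup>2) summable_on UNIV \<and>
      (\<Sum>\<^sub>\<infinity>x. (cmod (G x - vec (F n) x))\<^sup>2) \<le> e\<^sup>2" if "n \<ge> N" for n
    proof
      show S: "(\<lambda>x. (cmod (G x - vec (F n) x))\<^sup>2) summable_on UNIV"
        by (rule nonneg_bdd_above_summable_on) (auto intro!: bdd_aboveI[of _ "e\<^sup>2"] fin that)
      show "(\<Sum>\<^sub>\<infinity>x. (cmod (G x - vec (F n) x))\<^sup>2) \<le> e\<^sup>2"
        by (rule infsum_le_finite_sums[OF S]) (auto intro: fin that)
    qed
    thus ?thesis by blast
  qed
  obtain N1 where N1: "(\<lambda>x. (cmod (G x - vec (F N1) x))\<^sup>2) summable_on UNIV"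
    using main[of 1] by auto
  have GL2: "(\<lambda>x. (cmod (G x))\<^sup>2) summable_on UNIV"
    using L2_add_closed[OF N1 L2_sq_summable[of "F N1"]] by simp
  define g where "g = Abs_L2 G"
  have vg: "vec g = G" unfolding g_def using GL2 by (simp add: Abs_L2_inverse)
  have "F \<longlonglongrightarrow> g"
  proof (rule LIMSEQ_I)
    fix r :: real assume "r > 0"
    then obtain N where N: "\<forall>n\<ge>N. (\<Sum>\<^sub>\<infinity>x. (cmod (G x - vec (F n) x))\<^sup>2) \<le> (r/2)\<^sup>2"
      using main[of "r/2"] by auto
    have "norm (F n - g) < r" if "n \<ge> N" for n
    proof -
      have "(norm (F n - g))\<^sup>2 = (\<Sum>\<^sub>\<infinity>x. (cmod (G x - vec (F n) x))\<^sup>2)"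
        unfolding norm_L2_sq by (simp add: vg norm_minus_commute)
      also have "\<dots> \<le> (r/2)\<^sup>2" using N that by auto
      finally have "norm (F n - g) \<le> r/2"
        using \<open>r > 0\<close> by (simp add: power2_le_iff_abs_le)
      thus ?thesis using \<open>r > 0\<close> by simp
    qed
    thus "\<exists>no. \<forall>n\<ge>no. norm (F n - g) < r" by blast
  qed
  thus "convergent F" by (auto simp: convergent_def)
qed


definition unitvec :: "'a \<Rightarrow> 'a L2" where
  "unitvec a = Abs_L2 (\<lambda>x. if x = a then 1 else 0)"

lemma vec_delta: "vec (unitvec a) = (\<lambda>x. if x = a then 1 else 0)"
proof -
  have "(\<lambda>x. (cmod (if x = a then 1 else 0::complex))\<^sup>2) summable_on UNIV"
    by (rule finite_nonzero_values_imp_summable_on) (auto simp: finite_subset[of _ "{a}"])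
  thus ?thesis unfolding unitvec_def by (simp add: Abs_L2_inverse)
qed

lemma delta_nonzero: "unitvec a \<noteq> 0"
proof
  assume "unitvec a = 0"
  hence "vec (unitvec a) a = vec 0 a" by simp
  thus False by (simp add: vec_delta)
qed

lemma zero_ne_id_blinfun: "(0::'a L2 \<Rightarrow>\<^sub>L 'a L2) \<noteq> id_blinfun"
proof
  obtain a0 :: 'a where True by simp
  assume "(0::'a L2 \<Rightarrow>\<^sub>L 'a L2) = id_blinfun"
  hence "blinfun_apply (0::'a L2 \<Rightarrow>\<^sub>L 'a L2) (unitvec a0) = unitvec a0"
    by (metis blinfun_apply_id_blinfun id_apply)
  thus False using delta_nonzero by (metis zero_blinfun.rep_eq)
qed

lemma norm_id_blinfun_L2: "norm (id_blinfun :: 'a L2 \<Rightarrow>\<^sub>L 'a L2) = 1"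
proof (rule antisym)
  show "norm (id_blinfun :: 'a L2 \<Rightarrow>\<^sub>L 'a L2) \<le> 1" by (rule norm_blinfun_id_le)
  obtain a0 :: 'a where True by simp
  have "norm (unitvec a0 :: 'a L2) = norm (blinfun_apply (id_blinfun :: 'a L2 \<Rightarrow>\<^sub>L 'a L2) (unitvec a0))"
    by simp
  also have "\<dots> \<le> norm (id_blinfun :: 'a L2 \<Rightarrow>\<^sub>L 'a L2) * norm (unitvec a0 :: 'a L2)"
    by (rule norm_blinfun)
  finally have *: "norm (unitvec a0 :: 'a L2) \<le> norm (id_blinfun :: 'a L2 \<Rightarrow>\<^sub>L 'a L2) * norm (unitvec a0 :: 'a L2)" .
  have "0 < norm (unitvec a0 :: 'a L2)" using delta_nonzero[of a0] zero_less_norm_iff by blast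
  thus "1 \<le> norm (id_blinfun :: 'a L2 \<Rightarrow>\<^sub>L 'a L2)" using * mult_le_cancel_right1 by blast
qed

typedef 'a op = "UNIV :: ('a L2 \<Rightarrow>\<^sub>L 'a L2) set"
  morphisms opr Abs_op by auto

lemma Abs_op_inv[simp]: "opr (Abs_op A) = A"
  by (simp add: Abs_op_inverse)

lemma op_eq_iff: "A = B \<longleftrightarrow> opr A = opr B"
  by (simp add: opr_inject)

instantiation op :: (type) real_normed_algebra_1
begin
definition "zero_op = Abs_op 0"
definition "plus_op A B = Abs_op (opr A + opr B)"
definition "minus_op A B = Abs_op (opr A - opr B)"
definition "uminus_op A = Abs_op (- opr A)"
definition "scaleR_op r A = Abs_op (r *\<^sub>R opr A)"
definition "times_op A B = Abs_op (opr A o\<^sub>L opr B)"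
definition "one_op = Abs_op id_blinfun"
definition "norm_op A = norm (opr A)"
definition "dist_op (A::'a op) B = norm (opr A - opr B)"
definition "sgn_op (A::'a op) = Abs_op (inverse (norm (opr A)) *\<^sub>R opr A)"
definition uniformity_op :: "('a op \<times> 'a op) filter" where
  "uniformity_op = (INF e\<in>{0<..}. principal {(x, y). dist x y < e})"
definition open_op :: "'a op set \<Rightarrow> bool" where
  "open_op U \<longleftrightarrow> (\<forall>x\<in>U. \<forall>\<^sub>F (x', y) in uniformity. x' = x \<longrightarrow> y \<in> U)"

lemma opr_simps:
  "opr 0 = 0" "opr (A + B) = opr A + opr B" "opr (A - B) = opr A - opr B"
  "opr (- A) = - opr A" "opr (r *\<^sub>R A) = r *\<^sub>R opr A" "opr (A * B) = opr A o\<^sub>L opr B"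
  "opr 1 = id_blinfun"
  by (simp_all add: zero_op_def plus_op_def minus_op_def uminus_op_def scaleR_op_def times_op_def one_op_def)

instance
proof
  fix a b c :: "'a op" and r s :: real
  show "a + b + c = a + (b + c)" by (simp add: op_eq_iff opr_simps algebra_simps)
  show "a + b = b + a" by (simp add: op_eq_iff opr_simps algebra_simps)
  show "0 + a = a" by (simp add: op_eq_iff opr_simps)
  show "- a + a = 0" by (simp add: op_eq_iff opr_simps)
  show "a - b = a + - b" by (simp add: op_eq_iff opr_simps)
  show "r *\<^sub>R (a + b) = r *\<^sub>R a + r *\<^sub>R b" by (simp add: op_eq_iff opr_simps algebra_simps)
  show "(r + s) *\<^sub>R a = r *\<^sub>R a + s *\<^sub>R a" by (simp add: op_eq_iff opr_simps algebra_simps)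
  show "r *\<^sub>R s *\<^sub>R a = (r * s) *\<^sub>R a" by (simp add: op_eq_iff opr_simps)
  show "1 *\<^sub>R a = a" by (simp add: op_eq_iff opr_simps)
  show "a * b * c = a * (b * c)"
    by (auto simp: op_eq_iff opr_simps intro!: blinfun_eqI)
  show "(a + b) * c = a * c + b * c"
    by (auto simp: op_eq_iff opr_simps blinfun.bilinear_simps intro!: blinfun_eqI)
  show "a * (b + c) = a * b + a * c"
    by (auto simp: op_eq_iff opr_simps blinfun.bilinear_simps intro!: blinfun_eqI)
  show "r *\<^sub>R a * b = r *\<^sub>R (a * b)"
    by (auto simp: op_eq_iff opr_simps blinfun.bilinear_simps intro!: blinfun_eqI)
  show "a * r *\<^sub>R b = r *\<^sub>R (a * b)"
    by (auto simp: op_eq_iff opr_simps blinfun.bilinear_simps intro!: blinfun_eqI)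
  show "1 * a = a" by (auto simp: op_eq_iff opr_simps intro!: blinfun_eqI)
  show "a * 1 = a" by (auto simp: op_eq_iff opr_simps intro!: blinfun_eqI)
  show "dist a b = norm (a - b)" by (simp add: dist_op_def norm_op_def opr_simps)
  show "norm a = 0 \<longleftrightarrow> a = 0" by (simp add: norm_op_def op_eq_iff opr_simps)
  show "norm (a + b) \<le> norm a + norm b" by (simp add: norm_op_def opr_simps norm_triangle_ineq)
  show "norm (r *\<^sub>R a) = \<bar>r\<bar> * norm a" by (simp add: norm_op_def opr_simps)
  show "sgn a = inverse (norm a) *\<^sub>R a" by (simp add: sgn_op_def op_eq_iff opr_simps norm_op_def)
  show "(uniformity :: ('a op \<times> 'a op) filter) = (INF e\<in>{0<..}. principal {(x, y). dist x y < e})"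
    by (simp add: uniformity_op_def)
  show "open U \<longleftrightarrow> (\<forall>x\<in>U. \<forall>\<^sub>F (x', y) in uniformity. x' = x \<longrightarrow> y \<in> U)" for U :: "'a op set"
    by (simp add: open_op_def)
  show "norm (a * b) \<le> norm a * norm b" by (simp add: norm_op_def opr_simps norm_blinfun_compose)
  show "(0::'a op) \<noteq> 1"
  proof
    assume "(0::'a op) = 1"
    hence "(0::'a L2 \<Rightarrow>\<^sub>L 'a L2) = id_blinfun" by (simp add: op_eq_iff opr_simps)
    thus False using zero_ne_id_blinfun by blast
  qed
  show "norm (1::'a op) = 1" by (simp add: norm_op_def opr_simps norm_id_blinfun_L2)
qed
end


lemma norm_op_eq: "norm A = norm (opr A)"
  by (simp add: norm_op_def)

lemma dist_op_eq: "dist A B = dist (opr A) (opr B)"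
  by (simp add: dist_norm norm_op_def opr_simps)

instance op :: (type) banach
proof
  fix F :: "nat \<Rightarrow> 'a op"
  assume "Cauchy F"
  hence "Cauchy (\<lambda>n. opr (F n))"
    unfolding Cauchy_def by (simp add: dist_op_eq)
  then obtain L where L: "(\<lambda>n. opr (F n)) \<longlonglongrightarrow> L"
    using Cauchy_convergent_iff convergent_def by blast
  have "F \<longlonglongrightarrow> Abs_op L"
    using L unfolding lim_sequentially by (simp add: dist_op_eq)
  thus "convergent F" by (auto simp: convergent_def)
qed

lemma opr_mult_apply: "blinfun_apply (opr (A * B)) v = blinfun_apply (opr A) (blinfun_apply (opr B) v)"
  by (simp add: opr_simps)

lemma opr_one_apply: "blinfun_apply (opr 1) v = v"
  by (simp add: opr_simps)

lemma opr_apply_bound: "norm (blinfun_apply (opr A) v) \<le> norm A * norm v"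
  by (simp add: norm_op_def norm_blinfun)

lemma bounded_linear_opr_apply: "bounded_linear (\<lambda>A. blinfun_apply (opr A) v)"
proof (rule bounded_linear_intro[of _ "norm v"])
  show "blinfun_apply (opr (A + B)) v = blinfun_apply (opr A) v + blinfun_apply (opr B) v" for A B
    by (simp add: opr_simps blinfun.bilinear_simps)
  show "blinfun_apply (opr (r *\<^sub>R A)) v = r *\<^sub>R blinfun_apply (opr A) v" for r A
    by (simp add: opr_simps blinfun.bilinear_simps)
  show "norm (blinfun_apply (opr A) v) \<le> norm A * norm v" for A
    by (rule opr_apply_bound)
qed

lemma opr_apply_simps:
  "blinfun_apply (opr (A + B)) v = blinfun_apply (opr A) v + blinfun_apply (opr B) v"
  "blinfun_apply (opr (A - B)) v = blinfun_apply (opr A) v - blinfun_apply (opr B) v"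
  "blinfun_apply (opr (- A)) v = - blinfun_apply (opr A) v"
  "blinfun_apply (opr (r *\<^sub>R A)) v = r *\<^sub>R blinfun_apply (opr A) v"
  "blinfun_apply (opr 0) v = 0"
  by (simp_all add: opr_simps blinfun.bilinear_simps)

definition mkop :: "('a L2 \<Rightarrow> 'a L2) \<Rightarrow> 'a op" where
  "mkop f = Abs_op (Blinfun f)"

lemma mkop_apply: "bounded_linear f \<Longrightarrow> blinfun_apply (opr (mkop f)) v = f v"
  by (simp add: mkop_def bounded_linear_Blinfun_apply)

lemma norm_mkop_le:
  assumes "bounded_linear f" "\<And>v. norm (f v) \<le> C * norm v" "0 \<le> C"
  shows "norm (mkop f) \<le> C"
  unfolding norm_op_def mkop_def using assms
  by (simp add: norm_blinfun_bound bounded_linear_Blinfun_apply)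


lemma nonneg_swap:
  fixes F :: "'a \<Rightarrow> 'b \<Rightarrow> real"
  assumes nn: "\<And>x y. x \<in> A \<Longrightarrow> y \<in> B \<Longrightarrow> 0 \<le> F x y"
    and inner: "\<And>x. x \<in> A \<Longrightarrow> F x summable_on B"
    and outer: "(\<lambda>x. \<Sum>\<^sub>\<infinity>y\<in>B. F x y) summable_on A"
  shows "(\<forall>y\<in>B. (\<lambda>x. F x y) summable_on A) \<and> (\<lambda>y. \<Sum>\<^sub>\<infinity>x\<in>A. F x y) summable_on B \<and>
         (\<Sum>\<^sub>\<infinity>x\<in>A. \<Sum>\<^sub>\<infinity>y\<in>B. F x y) = (\<Sum>\<^sub>\<infinity>y\<in>B. \<Sum>\<^sub>\<infinity>x\<in>A. F x y)"
proof -
  have in2: "(\<lambda>y. norm (F x y)) summable_on B" if "x \<in> A" for x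
  proof -
    have "(\<lambda>y. norm (F x y)) summable_on B \<longleftrightarrow> F x summable_on B"
      by (rule summable_on_cong) (simp add: nn that)
    thus ?thesis using inner[OF that] by simp
  qed
  have eqn: "(\<Sum>\<^sub>\<infinity>y\<in>B. norm (F x y)) = (\<Sum>\<^sub>\<infinity>y\<in>B. F x y)" if "x \<in> A" for x
    by (rule infsum_cong) (simp add: nn that)
  have nn2: "0 \<le> (\<Sum>\<^sub>\<infinity>y\<in>B. F x y)" if "x \<in> A" for x
    by (rule infsum_nonneg) (simp add: nn that)
  have out2: "(\<lambda>x. norm (\<Sum>\<^sub>\<infinity>y\<in>B. norm (F x y))) summable_on A"
  proof -
    have "(\<lambda>x. norm (\<Sum>\<^sub>\<infinity>y\<in>B. norm (F x y))) summable_on A \<longleftrightarrow> (\<lambda>x. \<Sum>\<^sub>\<infinity>y\<in>B. F x y) summable_on A"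
      by (rule summable_on_cong) (metis eqn nn2 real_norm_def abs_of_nonneg)
    thus ?thesis using outer by simp
  qed
  have abs: "(\<lambda>z. norm ((\<lambda>(x,y). F x y) z)) summable_on (A \<times> B)"
    apply (rule Infinite_Sum.abs_summable_on_Sigma_iff[where f="\<lambda>(x,y). F x y" and A=A and B="\<lambda>_. B", THEN iffD2])
    using in2 out2 by simp
  hence prod: "(\<lambda>(x,y). F x y) summable_on (A \<times> B)"
    by (rule abs_summable_summable)
  have abs0: "(\<lambda>(y,x). (\<lambda>z. norm ((\<lambda>(x,y). F x y) z)) (x,y)) summable_on (B \<times> A)"
    using summable_on_swap[of "\<lambda>z. norm ((\<lambda>(x,y). F x y) z)" A B, THEN iffD1, OF abs] .
  have abs': "(\<lambda>z. norm ((\<lambda>(y,x). F x y) z)) summable_on (B \<times> A)"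
  proof -
    have "(\<lambda>(y,x). (\<lambda>z. norm ((\<lambda>(x,y). F x y) z)) (x,y)) = (\<lambda>z. norm ((\<lambda>(y,x). F x y) z))"
      by (simp add: fun_eq_iff)
    thus ?thesis using abs0 by simp
  qed
  have SS: "\<forall>y\<in>B. (\<lambda>x. norm ((\<lambda>(y,x). F x y) (y, x))) summable_on A"
    using Infinite_Sum.abs_summable_on_Sigma_iff[where f="\<lambda>(y,x). F x y" and A=B and B="\<lambda>_. A", THEN iffD1, OF abs']
    by simp
  have S1: "\<forall>y\<in>B. (\<lambda>x. F x y) summable_on A"
  proof
    fix y assume y: "y \<in> B"
    have "(\<lambda>x. norm (F x y)) summable_on A" using SS y by simp
    thus "(\<lambda>x. F x y) summable_on A" by (rule abs_summable_summable)
  qed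
  have S2: "(\<lambda>y. \<Sum>\<^sub>\<infinity>x\<in>A. F x y) summable_on B"
  proof -
    have P: "(\<lambda>(y,x). F x y) summable_on (B \<times> A)"
      using abs' by (rule abs_summable_summable)
    show ?thesis
      by (rule summable_on_Sigma[of "\<lambda>y x. F x y" B "\<lambda>_. A"])
         (use P S1 in \<open>simp_all add: uniformly_continuous_add\<close>)
  qed
  have "(\<Sum>\<^sub>\<infinity>x\<in>A. \<Sum>\<^sub>\<infinity>y\<in>B. F x y) = (\<Sum>\<^sub>\<infinity>y\<in>B. \<Sum>\<^sub>\<infinity>x\<in>A. F x y)"
    by (rule infsum_swap_banach) (use prod in simp)
  thus ?thesis using S1 S2 by blast
qed

lemma real_CS_aux:
  fixes L S Q :: real
  assumes "0 \<le> L" "0 \<le> S" "0 \<le> Q"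
    and le: "\<And>t. t > 0 \<Longrightarrow> L \<le> (t/2) * S + Q / (2*t)"
  shows "L\<^sup>2 \<le> S * Q"
proof (cases "L = 0")
  case True thus ?thesis using assms by simp
next
  case False
  hence L: "L > 0" using assms by simp
  show ?thesis
  proof (cases "Q > 0")
    case True
    define t where "t = Q / L"
    have t: "t > 0" using True L by (simp add: t_def)
    have "L \<le> (Q / L / 2) * S + Q / (2 * (Q / L))" using le[OF t] by (simp add: t_def)
    also have "Q / (2 * (Q / L)) = L / 2" using True L by (simp add: field_simps)
    finally have "L / 2 \<le> (Q / L / 2) * S" by simp
    hence "L * L \<le> Q * S" using L by (simp add: field_simps)
    thus ?thesis by (simp add: power2_eq_square mult.commute)
  next
    case False
    hence Q0: "Q = 0" using assms by simp
    define t where "t = L / (S + 1)"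
    have t: "t > 0" using L assms by (simp add: t_def)
    have "L \<le> t / 2 * S" using le[OF t] Q0 by simp
    also have "\<dots> = L * S / (2 * (S + 1))" using L assms by (simp add: t_def field_simps)
    also have "\<dots> < L"
    proof -
      have "L * S < L * (2 * (S + 1))" using L assms by (intro mult_strict_left_mono) auto
      thus ?thesis using assms by (simp add: divide_less_eq)
    qed
    finally show ?thesis by simp
  qed
qed

lemma infsum_CS:
  fixes a c :: "'a \<Rightarrow> real"
  assumes nn: "\<And>y. y \<in> A \<Longrightarrow> 0 \<le> a y" and sa: "a summable_on A"
    and sc: "(\<lambda>y. a y * (c y)\<^sup>2) summable_on A"
  shows "(\<lambda>y. a y * \<bar>c y\<bar>) summable_on A"
    and "(\<Sum>\<^sub>\<infinity>y\<in>A. a y * \<bar>c y\<bar>)\<^sup>2 \<le> (\<Sum>\<^sub>\<infinity>y\<in>A. a y) * (\<Sum>\<^sub>\<infinity>y\<in>A. a y * (c y)\<^sup>2)"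
proof -
  have amgm: "a y * \<bar>c y\<bar> \<le> (t/2) * a y + (1/(2*t)) * (a y * (c y)\<^sup>2)" if "y \<in> A" "t > 0" for y t
  proof -
    have "0 \<le> (t - \<bar>c y\<bar>)\<^sup>2" by simp
    hence "\<bar>c y\<bar> * (2*t) \<le> t\<^sup>2 + (c y)\<^sup>2" by (simp add: power2_eq_square algebra_simps)
    hence "\<bar>c y\<bar> \<le> t/2 + (c y)\<^sup>2 / (2*t)" using \<open>t > 0\<close> by (simp add: field_simps power2_eq_square)
    from mult_left_mono[OF this nn[OF \<open>y \<in> A\<close>]] show ?thesis by (simp add: algebra_simps)
  qed
  have sum1: "(\<lambda>y. (t/2) * a y + (1/(2*t)) * (a y * (c y)\<^sup>2)) summable_on A" for t
    by (intro summable_on_add summable_on_cmult_right sa sc)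
  show S: "(\<lambda>y. a y * \<bar>c y\<bar>) summable_on A"
    by (rule summable_on_comparison_test[OF sum1[of 1]]) (use amgm[of _ 1] nn in auto)
  show "(\<Sum>\<^sub>\<infinity>y\<in>A. a y * \<bar>c y\<bar>)\<^sup>2 \<le> (\<Sum>\<^sub>\<infinity>y\<in>A. a y) * (\<Sum>\<^sub>\<infinity>y\<in>A. a y * (c y)\<^sup>2)"
  proof (rule real_CS_aux)
    show "0 \<le> (\<Sum>\<^sub>\<infinity>y\<in>A. a y * \<bar>c y\<bar>)" by (rule infsum_nonneg) (use nn in auto)
    show "0 \<le> (\<Sum>\<^sub>\<infinity>y\<in>A. a y)" by (rule infsum_nonneg) (use nn in auto)
    show "0 \<le> (\<Sum>\<^sub>\<infinity>y\<in>A. a y * (c y)\<^sup>2)" by (rule infsum_nonneg) (use nn in auto)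
    fix t :: real assume t: "t > 0"
    have "(\<Sum>\<^sub>\<infinity>y\<in>A. a y * \<bar>c y\<bar>) \<le> (\<Sum>\<^sub>\<infinity>y\<in>A. (t/2) * a y + (1/(2*t)) * (a y * (c y)\<^sup>2))"
      by (rule infsum_mono[OF S sum1]) (use amgm t in auto)
    also have "\<dots> = (\<Sum>\<^sub>\<infinity>y\<in>A. (t/2) * a y) + (\<Sum>\<^sub>\<infinity>y\<in>A. (1/(2*t)) * (a y * (c y)\<^sup>2))"
      by (rule infsum_add) (intro summable_on_cmult_right sa sc)+
    also have "\<dots> = (t/2) * (\<Sum>\<^sub>\<infinity>y\<in>A. a y) + (1/(2*t)) * (\<Sum>\<^sub>\<infinity>y\<in>A. a y * (c y)\<^sup>2)"
      by (subst infsum_cmult_right[OF sa], subst infsum_cmult_right[OF sc], rule refl)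
    finally show "(\<Sum>\<^sub>\<infinity>y\<in>A. a y * \<bar>c y\<bar>) \<le> (t/2) * (\<Sum>\<^sub>\<infinity>y\<in>A. a y) + (\<Sum>\<^sub>\<infinity>y\<in>A. a y * (c y)\<^sup>2) / (2*t)"
      by simp
  qed
qed

lemma nn_integral_count_space_infsum:
  fixes g :: "'a \<Rightarrow> real"
  assumes nn: "\<And>x. x \<in> A \<Longrightarrow> 0 \<le> g x" and s: "g summable_on A"
  shows "(\<integral>\<^sup>+x. ennreal (g x) \<partial>count_space A) = ennreal (\<Sum>\<^sub>\<infinity>x\<in>A. g x)"
proof -
  have "(\<lambda>x. norm (g x)) summable_on A"
    using s by (rule summable_on_cong[THEN iffD1, rotated]) (use nn in auto)
  hence int: "integrable (count_space A) g"
    using abs_summable_equivalent[of g A] unfolding abs_summable_on_def by simp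
  have "(\<integral>\<^sup>+x. ennreal (g x) \<partial>count_space A) = ennreal (integral\<^sup>L (count_space A) g)"
    by (rule nn_integral_eq_integral[OF int]) (use nn in \<open>auto simp: AE_count_space\<close>)
  also have "integral\<^sup>L (count_space A) g = infsetsum g A" by (simp add: infsetsum_def)
  also have "\<dots> = (\<Sum>\<^sub>\<infinity>x\<in>A. g x)"
    by (rule infsetsum_infsum) (use int in \<open>simp add: abs_summable_on_def\<close>)
  finally show ?thesis .
qed

lemma nn_integral_count_space_not_summable:
  fixes g :: "'a \<Rightarrow> real"
  assumes nn: "\<And>x. x \<in> A \<Longrightarrow> 0 \<le> g x" and s: "\<not> g summable_on A"
  shows "(\<integral>\<^sup>+x. ennreal (g x) \<partial>count_space A) = \<infinity>"
proof (rule ccontr)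
  assume "(\<integral>\<^sup>+x. ennreal (g x) \<partial>count_space A) \<noteq> \<infinity>"
  hence fin: "(\<integral>\<^sup>+x. ennreal (norm (g x)) \<partial>count_space A) < \<infinity>"
    using nn by (subst nn_integral_cong[where v = "\<lambda>x. ennreal (g x)"]) (auto simp: top.not_eq_extremum)
  have "integrable (count_space A) g"
    using fin by (subst integrable_iff_bounded) auto
  hence "(\<lambda>x. norm (g x)) summable_on A"
    using abs_summable_equivalent[of g A] unfolding abs_summable_on_def by simp
  hence "g summable_on A" by (rule abs_summable_summable)
  thus False using s by simp
qed

lemma enn_powr_half: "0 \<le> s \<Longrightarrow> enn_powr (ennreal s) (1/2) = ennreal (sqrt s)"
  by (simp add: enn_powr_def powr_half_sqrt)


locale wgraph =
  fixes X :: "'a set" and b :: "'a \<Rightarrow> 'a \<Rightarrow> real" and m :: "'a \<Rightarrow> real"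
  assumes wg: "weighted_graph X b m" and bdeg: "bounded_degree X b m" and bmeas: "bounded_measure X m"
begin

lemma cntX: "countable X" using wg by (simp add: weighted_graph_def)
lemma mpos: "x \<in> X \<Longrightarrow> 0 < m x" using wg by (simp add: weighted_graph_def)
lemma bnn: "x \<in> X \<Longrightarrow> y \<in> X \<Longrightarrow> 0 \<le> b x y" using wg by (simp add: weighted_graph_def)
lemma bsym: "x \<in> X \<Longrightarrow> y \<in> X \<Longrightarrow> b x y = b y x" using wg by (simp add: weighted_graph_def)
lemma bsum: "x \<in> X \<Longrightarrow> (\<lambda>y. b x y) summable_on X" using wg by (simp add: weighted_graph_def)
lemma bsum': "y \<in> X \<Longrightarrow> (\<lambda>x. b x y) summable_on X"
proof -
  assume y: "y \<in> X"
  have "(\<lambda>x. b x y) summable_on X \<longleftrightarrow> (\<lambda>x. b y x) summable_on X"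
    by (rule summable_on_cong) (simp add: bsym y)
  thus ?thesis using bsum[OF y] by simp
qed

definition "Dm = max 1 (SOME C. \<forall>x\<in>X. Deg X b m x \<le> C)"
definition "Mm = max 1 (SOME C. \<forall>x\<in>X. m x \<le> C)"

lemma Dm_ge1: "1 \<le> Dm" by (simp add: Dm_def)
lemma Dm_pos: "0 < Dm" using Dm_ge1 by simp
lemma Mm_pos: "0 < Mm" by (simp add: Mm_def)

lemma m_le: "x \<in> X \<Longrightarrow> m x \<le> Mm"
proof -
  have "\<exists>C. \<forall>x\<in>X. m x \<le> C" using bmeas by (simp add: bounded_measure_def)
  hence "\<forall>x\<in>X. m x \<le> (SOME C. \<forall>x\<in>X. m x \<le> C)" by (rule someI_ex)
  thus "x \<in> X \<Longrightarrow> m x \<le> Mm" unfolding Mm_def by force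
qed

lemma deg_bound: "x \<in> X \<Longrightarrow> (\<Sum>\<^sub>\<infinity>y\<in>X. b x y) \<le> Dm * m x"
proof -
  assume x: "x \<in> X"
  have "\<exists>C. \<forall>x\<in>X. Deg X b m x \<le> C" using bdeg by (simp add: bounded_degree_def)
  hence "\<forall>x\<in>X. Deg X b m x \<le> (SOME C. \<forall>x\<in>X. Deg X b m x \<le> C)" by (rule someI_ex)
  hence "Deg X b m x \<le> Dm" unfolding Dm_def using x by force
  thus ?thesis using mpos[OF x] by (simp add: Deg_def divide_le_eq mult.commute)
qed

lemma b_le: "x \<in> X \<Longrightarrow> y \<in> X \<Longrightarrow> b x y \<le> Dm * m x"
proof -
  assume x: "x \<in> X" and y: "y \<in> X"
  have "(\<Sum>z\<in>{y}. b x z) \<le> (\<Sum>\<^sub>\<infinity>z\<in>X. b x z)"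
    by (rule finite_sum_le_infsum) (use bsum[OF x] bnn[OF x] y in auto)
  thus ?thesis using deg_bound[OF x] by simp
qed

lemma b_le': "x \<in> X \<Longrightarrow> y \<in> X \<Longrightarrow> b x y \<le> Dm * m y"
  using b_le bsym by metis

definition l2f :: "('a \<Rightarrow> complex) \<Rightarrow> bool" where
  "l2f f \<longleftrightarrow> (\<lambda>x. m x * (cmod (f x))\<^sup>2) summable_on X"

lemma l2_nn: "x \<in> X \<Longrightarrow> 0 \<le> m x * (cmod (f x))\<^sup>2"
  using mpos by (simp add: less_imp_le)

lemma l2norm_eq:
  assumes "A \<subseteq> X" "(\<lambda>x. m x * (cmod (f x))\<^sup>2) summable_on A"
  shows "l2norm m A f = ennreal (sqrt (\<Sum>\<^sub>\<infinity>x\<in>A. m x * (cmod (f x))\<^sup>2))"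
proof -
  have "(\<integral>\<^sup>+x. ennreal (m x * (cmod (f x))\<^sup>2) \<partial>count_space A) = ennreal (\<Sum>\<^sub>\<infinity>x\<in>A. m x * (cmod (f x))\<^sup>2)"
    by (rule nn_integral_count_space_infsum) (use assms l2_nn in auto)
  moreover have "0 \<le> (\<Sum>\<^sub>\<infinity>x\<in>A. m x * (cmod (f x))\<^sup>2)"
    by (rule infsum_nonneg) (use assms l2_nn in auto)
  ultimately show ?thesis unfolding l2norm_def by (simp add: enn_powr_half)
qed

lemma in_l2_iff:
  assumes "A \<subseteq> X"
  shows "in_l2 m A f \<longleftrightarrow> (\<lambda>x. m x * (cmod (f x))\<^sup>2) summable_on A"
proof
  assume "in_l2 m A f"
  show "(\<lambda>x. m x * (cmod (f x))\<^sup>2) summable_on A"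
  proof (rule ccontr)
    assume "\<not> ?thesis"
    hence "(\<integral>\<^sup>+x. ennreal (m x * (cmod (f x))\<^sup>2) \<partial>count_space A) = \<infinity>"
      by (intro nn_integral_count_space_not_summable) (use assms l2_nn in auto)
    hence "l2norm m A f = \<infinity>" by (simp add: l2norm_def enn_powr_def)
    thus False using \<open>in_l2 m A f\<close> by (simp add: in_l2_def)
  qed
next
  assume "(\<lambda>x. m x * (cmod (f x))\<^sup>2) summable_on A"
  thus "in_l2 m A f" using l2norm_eq[OF assms] by (simp add: in_l2_def)
qed

definition U :: "('a \<Rightarrow> complex) \<Rightarrow> 'a L2" where
  "U f = Abs_L2 (\<lambda>x. if x \<in> X then complex_of_real (sqrt (m x)) * f x else 0)"

definition Uinv :: "'a L2 \<Rightarrow> 'a \<Rightarrow> complex" where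
  "Uinv v x = vec v x / complex_of_real (sqrt (m x))"

lemma cmod_sqrt_mult: "x \<in> X \<Longrightarrow> (cmod (complex_of_real (sqrt (m x)) * z))\<^sup>2 = m x * (cmod z)\<^sup>2"
  using mpos[of x] by (simp add: norm_mult power_mult_distrib)

lemma vec_U:
  assumes "l2f f"
  shows "vec (U f) = (\<lambda>x. if x \<in> X then complex_of_real (sqrt (m x)) * f x else 0)"
proof -
  have "(\<lambda>x. (cmod (if x \<in> X then complex_of_real (sqrt (m x)) * f x else 0))\<^sup>2) summable_on UNIV
        \<longleftrightarrow> (\<lambda>x. m x * (cmod (f x))\<^sup>2) summable_on X"
    by (rule summable_on_cong_neutral) (auto simp: cmod_sqrt_mult)
  thus ?thesis using assms unfolding U_def l2f_def by (simp add: Abs_L2_inverse)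
qed

lemma norm_U_sq:
  assumes "l2f f"
  shows "(norm (U f))\<^sup>2 = (\<Sum>\<^sub>\<infinity>x\<in>X. m x * (cmod (f x))\<^sup>2)"
  unfolding norm_L2_sq vec_U[OF assms]
  by (rule infsum_cong_neutral) (auto simp: cmod_sqrt_mult)

lemma norm_U:
  assumes "l2f f"
  shows "norm (U f) = sqrt (\<Sum>\<^sub>\<infinity>x\<in>X. m x * (cmod (f x))\<^sup>2)"
  using norm_U_sq[OF assms] by (metis norm_ge_zero real_sqrt_unique)

lemma l2norm_U:
  assumes "l2f f"
  shows "l2norm m X f = ennreal (norm (U f))"
  using l2norm_eq[of X f] assms by (simp add: l2f_def norm_U)

lemma Uinv_sq: "x \<in> X \<Longrightarrow> m x * (cmod (Uinv v x))\<^sup>2 = (cmod (vec v x))\<^sup>2"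
  using mpos[of x] by (simp add: Uinv_def norm_divide power_divide)

lemma l2f_Uinv: "l2f (Uinv v)"
proof -
  have "(\<lambda>x. m x * (cmod (Uinv v x))\<^sup>2) summable_on X \<longleftrightarrow> (\<lambda>x. (cmod (vec v x))\<^sup>2) summable_on X"
    by (rule summable_on_cong) (simp add: Uinv_sq)
  thus ?thesis using L2_sq_summable unfolding l2f_def by blast
qed

lemma sum_Uinv_le: "(\<Sum>\<^sub>\<infinity>x\<in>X. m x * (cmod (Uinv v x))\<^sup>2) \<le> (norm v)\<^sup>2"
proof -
  have "(\<Sum>\<^sub>\<infinity>x\<in>X. m x * (cmod (Uinv v x))\<^sup>2) = (\<Sum>\<^sub>\<infinity>x\<in>X. (cmod (vec v x))\<^sup>2)"
    by (rule infsum_cong) (simp add: Uinv_sq)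
  also have "\<dots> \<le> (\<Sum>\<^sub>\<infinity>x. (cmod (vec v x))\<^sup>2)"
    by (rule infsum_mono_neutral) (auto simp: L2_sq_summable)
  finally show ?thesis by (simp add: norm_L2_sq)
qed

lemma Uinv_U: "l2f f \<Longrightarrow> x \<in> X \<Longrightarrow> Uinv (U f) x = f x"
  using mpos[of x] by (simp add: Uinv_def vec_U)

lemma vec_U_Uinv: "vec (U (Uinv v)) x = (if x \<in> X then vec v x else 0)"
  using mpos[of x] by (cases "x \<in> X") (auto simp: vec_U[OF l2f_Uinv] Uinv_def)

lemma U_add: "l2f f \<Longrightarrow> l2f g \<Longrightarrow> l2f (\<lambda>x. f x + g x) \<Longrightarrow> U (\<lambda>x. f x + g x) = U f + U g"
  by (rule L2_eqI) (simp add: vec_U algebra_simps)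

lemma U_scale: "l2f f \<Longrightarrow> l2f (\<lambda>x. complex_of_real r * f x) \<Longrightarrow> U (\<lambda>x. complex_of_real r * f x) = r *\<^sub>R U f"
  by (rule L2_eqI) (simp add: vec_U algebra_simps)

lemma l2f_b_sq:
  assumes "x \<in> X" "l2f f"
  shows "(\<lambda>y. b x y * (cmod (f y))\<^sup>2) summable_on X"
proof (rule summable_on_comparison_test)
  show "(\<lambda>y. Dm * (m y * (cmod (f y))\<^sup>2)) summable_on X"
    using assms(2) unfolding l2f_def by (rule summable_on_cmult_right)
  show "b x y * (cmod (f y))\<^sup>2 \<le> Dm * (m y * (cmod (f y))\<^sup>2)" if "y \<in> X" for y
    using b_le'[OF assms(1) that] by (simp add: mult_right_mono mult.assoc[symmetric])
  show "0 \<le> b x y * (cmod (f y))\<^sup>2" if "y \<in> X" for y using bnn assms(1) that by simp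
qed

lemma l2f_b_abs:
  assumes "x \<in> X" "l2f f"
  shows "(\<lambda>y. b x y * cmod (f y)) summable_on X"
  using infsum_CS(1)[of X "b x" "\<lambda>y. cmod (f y)"] bnn[OF assms(1)] bsum[OF assms(1)] l2f_b_sq[OF assms]
  by simp

lemma lap_summable:
  assumes "x \<in> X" "l2f f"
  shows "(\<lambda>y. complex_of_real (b x y) * (f x - f y)) summable_on X"
proof -
  have "(\<lambda>y. norm (complex_of_real (b x y) * (f x - f y))) summable_on X"
  proof (rule summable_on_comparison_test)
    show "(\<lambda>y. cmod (f x) * b x y + b x y * cmod (f y)) summable_on X"
      by (intro summable_on_add summable_on_cmult_right bsum l2f_b_abs assms)
    show "norm (complex_of_real (b x y) * (f x - f y)) \<le> cmod (f x) * b x y + b x y * cmod (f y)" if "y \<in> X" for y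
    proof -
      have "norm (complex_of_real (b x y) * (f x - f y)) = b x y * cmod (f x - f y)"
        using bnn[OF assms(1) that] by (simp add: norm_mult)
      also have "\<dots> \<le> b x y * (cmod (f x) + cmod (f y))"
        using bnn[OF assms(1) that] by (intro mult_left_mono norm_triangle_ineq4) auto
      finally show ?thesis by (simp add: algebra_simps)
    qed
  qed simp
  thus ?thesis by (rule abs_summable_summable)
qed

lemma Lap_cong: "x \<in> X \<Longrightarrow> (\<And>y. y \<in> X \<Longrightarrow> f y = g y) \<Longrightarrow> Lap X b m f x = Lap X b m g x"
  unfolding Lap_def by (auto intro!: infsum_cong)

lemma Lap_add:
  assumes "x \<in> X" "l2f f" "l2f g"
  shows "Lap X b m (\<lambda>y. f y + g y) x = Lap X b m f x + Lap X b m g x"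
proof -
  have "(\<Sum>\<^sub>\<infinity>y\<in>X. complex_of_real (b x y) * (f x + g x - (f y + g y))) =
        (\<Sum>\<^sub>\<infinity>y\<in>X. complex_of_real (b x y) * (f x - f y) + complex_of_real (b x y) * (g x - g y))"
    by (rule infsum_cong) (simp add: algebra_simps)
  also have "\<dots> = (\<Sum>\<^sub>\<infinity>y\<in>X. complex_of_real (b x y) * (f x - f y)) + (\<Sum>\<^sub>\<infinity>y\<in>X. complex_of_real (b x y) * (g x - g y))"
    by (rule infsum_add) (intro lap_summable assms)+
  finally show ?thesis unfolding Lap_def by (simp add: algebra_simps)
qed

lemma Lap_scale:
  assumes "x \<in> X" "l2f f"
  shows "Lap X b m (\<lambda>y. c * f y) x = c * Lap X b m f x"
proof -
  have "(\<Sum>\<^sub>\<infinity>y\<in>X. complex_of_real (b x y) * (c * f x - c * f y)) =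
        (\<Sum>\<^sub>\<infinity>y\<in>X. c * (complex_of_real (b x y) * (f x - f y)))"
    by (rule infsum_cong) (simp add: algebra_simps)
  also have "\<dots> = c * (\<Sum>\<^sub>\<infinity>y\<in>X. complex_of_real (b x y) * (f x - f y))"
    by (rule infsum_cmult_right) (intro lap_summable assms)
  finally show ?thesis unfolding Lap_def by (simp add: algebra_simps)
qed

lemma Lap_pt_bound:
  assumes x: "x \<in> X" and f: "l2f f"
  shows "m x * (cmod (Lap X b m f x))\<^sup>2 \<le> 2 * Dm\<^sup>2 * (m x * (cmod (f x))\<^sup>2) + 2 * Dm * (\<Sum>\<^sub>\<infinity>y\<in>X. b x y * (cmod (f y))\<^sup>2)"
proof -
  define S where "S = (\<Sum>\<^sub>\<infinity>y\<in>X. b x y)"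
  define L where "L = (\<Sum>\<^sub>\<infinity>y\<in>X. b x y * cmod (f y))"
  define Q where "Q = (\<Sum>\<^sub>\<infinity>y\<in>X. b x y * (cmod (f y))\<^sup>2)"
  have mx: "0 < m x" using mpos x by simp
  have S0: "0 \<le> S" unfolding S_def by (rule infsum_nonneg) (use bnn x in auto)
  have L0: "0 \<le> L" unfolding L_def by (rule infsum_nonneg) (use bnn x in auto)
  have Q0: "0 \<le> Q" unfolding Q_def by (rule infsum_nonneg) (use bnn x in auto)
  have SD: "S \<le> Dm * m x" unfolding S_def by (rule deg_bound[OF x])
  have CS: "L\<^sup>2 \<le> S * Q"
    using infsum_CS(2)[of X "b x" "\<lambda>y. cmod (f y)"] bnn[OF x] bsum[OF x] l2f_b_sq[OF x f]
    by (simp add: S_def L_def Q_def)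
  have "cmod (\<Sum>\<^sub>\<infinity>y\<in>X. complex_of_real (b x y) * (f x - f y)) \<le> (\<Sum>\<^sub>\<infinity>y\<in>X. cmod (f x) * b x y + b x y * cmod (f y))"
  proof (rule norm_infsum_le)
    show "((\<lambda>y. complex_of_real (b x y) * (f x - f y)) has_sum (\<Sum>\<^sub>\<infinity>y\<in>X. complex_of_real (b x y) * (f x - f y))) X"
      using lap_summable[OF x f] by (rule has_sum_infsum)
    show "((\<lambda>y. cmod (f x) * b x y + b x y * cmod (f y)) has_sum (\<Sum>\<^sub>\<infinity>y\<in>X. cmod (f x) * b x y + b x y * cmod (f y))) X"
      by (intro has_sum_infsum summable_on_add summable_on_cmult_right bsum l2f_b_abs x f)
    show "norm (complex_of_real (b x y) * (f x - f y)) \<le> cmod (f x) * b x y + b x y * cmod (f y)" if "y \<in> X" for y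
    proof -
      have "norm (complex_of_real (b x y) * (f x - f y)) = b x y * cmod (f x - f y)"
        using bnn[OF x that] by (simp add: norm_mult)
      also have "\<dots> \<le> b x y * (cmod (f x) + cmod (f y))"
        using bnn[OF x that] by (intro mult_left_mono norm_triangle_ineq4) auto
      finally show ?thesis by (simp add: algebra_simps)
    qed
  qed
  also have "\<dots> = cmod (f x) * S + L"
    unfolding S_def L_def
    by (subst infsum_add) (auto intro!: summable_on_cmult_right bsum l2f_b_abs x f simp: infsum_cmult_right bsum x)
  finally have N: "cmod (\<Sum>\<^sub>\<infinity>y\<in>X. complex_of_real (b x y) * (f x - f y)) \<le> cmod (f x) * S + L" .
  have lap: "cmod (Lap X b m f x) = cmod (\<Sum>\<^sub>\<infinity>y\<in>X. complex_of_real (b x y) * (f x - f y)) / m x"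
    using mx by (simp add: Lap_def norm_mult norm_divide)
  have "m x * (cmod (Lap X b m f x))\<^sup>2 = (cmod (\<Sum>\<^sub>\<infinity>y\<in>X. complex_of_real (b x y) * (f x - f y)))\<^sup>2 / m x"
    using mx by (simp add: lap power_divide power2_eq_square)
  also have "\<dots> \<le> (cmod (f x) * S + L)\<^sup>2 / m x"
    using N mx by (intro divide_right_mono power_mono) auto
  also have "\<dots> \<le> (2 * (cmod (f x) * S)\<^sup>2 + 2 * L\<^sup>2) / m x"
    using mx by (intro divide_right_mono sq_sum_le) auto
  also have "\<dots> \<le> (2 * (cmod (f x))\<^sup>2 * (Dm * m x)\<^sup>2 + 2 * (Dm * m x * Q)) / m x"
  proof (intro divide_right_mono add_mono)
    have "S\<^sup>2 \<le> (Dm * m x)\<^sup>2" using SD S0 by (intro power_mono) auto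
    thus "2 * (cmod (f x) * S)\<^sup>2 \<le> 2 * (cmod (f x))\<^sup>2 * (Dm * m x)\<^sup>2"
      by (simp add: power_mult_distrib mult_left_mono)
    have "S * Q \<le> Dm * m x * Q" using SD Q0 by (intro mult_right_mono) auto
    thus "2 * L\<^sup>2 \<le> 2 * (Dm * m x * Q)" using CS by simp
  qed (use mx in auto)
  also have "\<dots> = 2 * Dm\<^sup>2 * (m x * (cmod (f x))\<^sup>2) + 2 * Dm * Q"
    using mx by (simp add: field_simps power2_eq_square)
  finally show ?thesis by (simp add: Q_def)
qed

lemma Lap_l2:
  assumes f: "l2f f"
  shows "l2f (Lap X b m f)"
    and "(\<Sum>\<^sub>\<infinity>x\<in>X. m x * (cmod (Lap X b m f x))\<^sup>2) \<le> 4 * Dm\<^sup>2 * (\<Sum>\<^sub>\<infinity>x\<in>X. m x * (cmod (f x))\<^sup>2)"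
proof -
  define N where "N = (\<Sum>\<^sub>\<infinity>x\<in>X. m x * (cmod (f x))\<^sup>2)"
  have fs: "(\<lambda>x. m x * (cmod (f x))\<^sup>2) summable_on X" using f by (simp add: l2f_def)
  have inner: "(\<lambda>x. b x y * (cmod (f y))\<^sup>2) summable_on X" if "y \<in> X" for y
    using bsum'[OF that] by (rule summable_on_cmult_left)
  have eqy: "(\<Sum>\<^sub>\<infinity>x\<in>X. b x y * (cmod (f y))\<^sup>2) = (\<Sum>\<^sub>\<infinity>x\<in>X. b x y) * (cmod (f y))\<^sup>2" if "y \<in> X" for y
    using bsum'[OF that] by (rule infsum_cmult_left)
  have bnd_y: "(\<Sum>\<^sub>\<infinity>x\<in>X. b x y * (cmod (f y))\<^sup>2) \<le> Dm * (m y * (cmod (f y))\<^sup>2)" if y: "y \<in> X" for y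
  proof -
    have "(\<Sum>\<^sub>\<infinity>x\<in>X. b x y) = (\<Sum>\<^sub>\<infinity>x\<in>X. b y x)"
      by (rule infsum_cong) (simp add: bsym y)
    also have "\<dots> \<le> Dm * m y" by (rule deg_bound[OF y])
    finally show ?thesis unfolding eqy[OF y] by (simp add: mult_right_mono mult.assoc[symmetric])
  qed
  have outer: "(\<lambda>y. \<Sum>\<^sub>\<infinity>x\<in>X. b x y * (cmod (f y))\<^sup>2) summable_on X"
  proof (rule summable_on_comparison_test)
    show "(\<lambda>y. Dm * (m y * (cmod (f y))\<^sup>2)) summable_on X" using fs by (rule summable_on_cmult_right)
  qed (use bnd_y bnn in \<open>auto intro!: infsum_nonneg\<close>)
  have sw: "(\<lambda>x. \<Sum>\<^sub>\<infinity>y\<in>X. b x y * (cmod (f y))\<^sup>2) summable_on X \<and>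
     (\<Sum>\<^sub>\<infinity>y\<in>X. \<Sum>\<^sub>\<infinity>x\<in>X. b x y * (cmod (f y))\<^sup>2) = (\<Sum>\<^sub>\<infinity>x\<in>X. \<Sum>\<^sub>\<infinity>y\<in>X. b x y * (cmod (f y))\<^sup>2)"
    using nonneg_swap[of X X "\<lambda>y x. b x y * (cmod (f y))\<^sup>2", OF _ inner outer] bnn by auto
  have tot: "(\<Sum>\<^sub>\<infinity>x\<in>X. \<Sum>\<^sub>\<infinity>y\<in>X. b x y * (cmod (f y))\<^sup>2) \<le> Dm * N"
  proof -
    have "(\<Sum>\<^sub>\<infinity>y\<in>X. \<Sum>\<^sub>\<infinity>x\<in>X. b x y * (cmod (f y))\<^sup>2) \<le> (\<Sum>\<^sub>\<infinity>y\<in>X. Dm * (m y * (cmod (f y))\<^sup>2))"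
      by (rule infsum_mono[OF outer]) (use fs bnd_y in \<open>auto intro: summable_on_cmult_right\<close>)
    also have "\<dots> = Dm * N" unfolding N_def by (rule infsum_cmult_right[OF fs])
    finally show ?thesis using sw by simp
  qed
  have bound_sum: "(\<lambda>x. 2 * Dm\<^sup>2 * (m x * (cmod (f x))\<^sup>2) + 2 * Dm * (\<Sum>\<^sub>\<infinity>y\<in>X. b x y * (cmod (f y))\<^sup>2)) summable_on X"
    using fs sw by (intro summable_on_add summable_on_cmult_right) auto
  show S: "l2f (Lap X b m f)"
    unfolding l2f_def
    by (rule summable_on_comparison_test[OF bound_sum]) (use Lap_pt_bound[OF _ f] l2_nn in auto)
  have "(\<Sum>\<^sub>\<infinity>x\<in>X. m x * (cmod (Lap X b m f x))\<^sup>2) \<le>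
        (\<Sum>\<^sub>\<infinity>x\<in>X. 2 * Dm\<^sup>2 * (m x * (cmod (f x))\<^sup>2) + 2 * Dm * (\<Sum>\<^sub>\<infinity>y\<in>X. b x y * (cmod (f y))\<^sup>2))"
    by (rule infsum_mono[OF _ bound_sum]) (use S Lap_pt_bound[OF _ f] in \<open>auto simp: l2f_def\<close>)
  also have "\<dots> = 2 * Dm\<^sup>2 * N + 2 * Dm * (\<Sum>\<^sub>\<infinity>x\<in>X. \<Sum>\<^sub>\<infinity>y\<in>X. b x y * (cmod (f y))\<^sup>2)"
    unfolding N_def using fs sw
    by (subst infsum_add) (auto intro!: summable_on_cmult_right simp: infsum_cmult_right)
  also have "\<dots> \<le> 2 * Dm\<^sup>2 * N + 2 * Dm * (Dm * N)"
    using tot Dm_pos by (intro add_left_mono mult_left_mono) auto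
  also have "\<dots> = 4 * Dm\<^sup>2 * N" by (simp add: power2_eq_square)
  finally show "(\<Sum>\<^sub>\<infinity>x\<in>X. m x * (cmod (Lap X b m f x))\<^sup>2) \<le> 4 * Dm\<^sup>2 * (\<Sum>\<^sub>\<infinity>x\<in>X. m x * (cmod (f x))\<^sup>2)"
    by (simp add: N_def)
qed

end


definition restr :: "'a set \<Rightarrow> 'a L2 \<Rightarrow> 'a L2" where
  "restr S v = Abs_L2 (\<lambda>x. if x \<in> S then vec v x else 0)"

lemma vec_restr: "vec (restr S v) x = (if x \<in> S then vec v x else 0)"
proof -
  have "(\<lambda>x. (cmod (if x \<in> S then vec v x else 0))\<^sup>2) summable_on UNIV"
    by (rule summable_on_comparison_test[OF L2_sq_summable[of v]]) auto
  thus ?thesis unfolding restr_def by (simp add: Abs_L2_inverse)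
qed

lemma norm_restr_sq: "(norm (restr S v))\<^sup>2 = (\<Sum>\<^sub>\<infinity>x\<in>S. (cmod (vec v x))\<^sup>2)"
  unfolding norm_L2_sq vec_restr
  by (rule infsum_cong_neutral) auto

lemma norm_restr_le: "norm (restr S v) \<le> norm v"
proof -
  have "(norm (restr S v))\<^sup>2 \<le> (norm v)\<^sup>2"
    unfolding norm_L2_sq vec_restr
    by (rule infsum_mono) (auto simp: L2_sq_summable intro: summable_on_comparison_test[OF L2_sq_summable[of v]])
  thus ?thesis by (simp add: power2_le_iff_abs_le)
qed

lemma bounded_linear_restr: "bounded_linear (restr S)"
  by (rule bounded_linear_intro[of _ 1]) (auto intro!: L2_eqI simp: vec_restr norm_restr_le)

lemma inner_restr: "inner (restr S v) v = (\<Sum>\<^sub>\<infinity>x\<in>S. (cmod (vec v x))\<^sup>2)"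
  unfolding inner_L2_def vec_restr
  by (rule infsum_cong_neutral) (auto simp: complex_norm_square[symmetric])

lemma norm_sq_split: "(norm v)\<^sup>2 = (\<Sum>\<^sub>\<infinity>x\<in>S. (cmod (vec v x))\<^sup>2) + (\<Sum>\<^sub>\<infinity>x\<in>-S. (cmod (vec v x))\<^sup>2)"
proof -
  have "(\<Sum>\<^sub>\<infinity>x\<in>S \<union> -S. (cmod (vec v x))\<^sup>2) = (\<Sum>\<^sub>\<infinity>x\<in>S. (cmod (vec v x))\<^sup>2) + (\<Sum>\<^sub>\<infinity>x\<in>-S. (cmod (vec v x))\<^sup>2)"
    by (rule infsum_Un_disjoint) (auto simp: L2_sq_summable)
  thus ?thesis by (simp add: norm_L2_sq)
qed

definition Pop :: "'a set \<Rightarrow> 'a op" where "Pop S = mkop (restr S)"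

lemma Pop_apply: "blinfun_apply (opr (Pop S)) v = restr S v"
  by (simp add: Pop_def mkop_apply bounded_linear_restr)

lemma norm_Pop: "norm (Pop S) \<le> 1"
  unfolding Pop_def by (rule norm_mkop_le) (auto simp: bounded_linear_restr norm_restr_le)

context wgraph
begin

lemma U_cong: "(\<And>x. x \<in> X \<Longrightarrow> f x = g x) \<Longrightarrow> U f = U g"
  unfolding U_def by (rule arg_cong[where f = Abs_L2]) auto

lemma l2f_add: "l2f f \<Longrightarrow> l2f g \<Longrightarrow> l2f (\<lambda>x. f x + g x)"
proof -
  assume f: "l2f f" and g: "l2f g"
  have "(\<lambda>x. 2 * (m x * (cmod (f x))\<^sup>2) + 2 * (m x * (cmod (g x))\<^sup>2)) summable_on X"
    using f g unfolding l2f_def by (intro summable_on_add summable_on_cmult_right)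
  moreover have "m x * (cmod (f x + g x))\<^sup>2 \<le> 2 * (m x * (cmod (f x))\<^sup>2) + 2 * (m x * (cmod (g x))\<^sup>2)" if "x \<in> X" for x
  proof -
    have "(cmod (f x + g x))\<^sup>2 \<le> (cmod (f x) + cmod (g x))\<^sup>2"
      by (simp add: power_mono norm_triangle_ineq)
    also have "\<dots> \<le> 2 * (cmod (f x))\<^sup>2 + 2 * (cmod (g x))\<^sup>2" by (rule sq_sum_le)
    finally show ?thesis using mpos[OF that]
      by (metis (no_types, opaque_lifting) distrib_left less_imp_le mult.left_commute mult_left_mono)
  qed
  ultimately show ?thesis unfolding l2f_def
    by (rule summable_on_comparison_test) (use l2_nn in auto)
qed

lemma l2f_scale: "l2f f \<Longrightarrow> l2f (\<lambda>x. c * f x)"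
proof -
  assume f: "l2f f"
  have "(\<lambda>x. (cmod c)\<^sup>2 * (m x * (cmod (f x))\<^sup>2)) summable_on X"
    using f unfolding l2f_def by (rule summable_on_cmult_right)
  thus ?thesis unfolding l2f_def by (simp add: norm_mult power_mult_distrib mult_ac)
qed

definition hfun :: "'a L2 \<Rightarrow> 'a L2" where
  "hfun v = U (Lap X b m (Uinv v))"

lemma Uinv_add: "Uinv (v + w) = (\<lambda>x. Uinv v x + Uinv w x)"
  by (simp add: Uinv_def fun_eq_iff add_divide_distrib)

lemma Uinv_scale: "Uinv (r *\<^sub>R v) = (\<lambda>x. complex_of_real r * Uinv v x)"
  by (simp add: Uinv_def fun_eq_iff)

lemma hfun_add: "hfun (v + w) = hfun v + hfun w"
proof -
  have "hfun (v + w) = U (\<lambda>x. Lap X b m (Uinv v) x + Lap X b m (Uinv w) x)"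
    unfolding hfun_def Uinv_add by (rule U_cong) (simp add: Lap_add l2f_Uinv)
  also have "\<dots> = hfun v + hfun w"
    unfolding hfun_def by (rule U_add) (auto intro: l2f_add Lap_l2 l2f_Uinv)
  finally show ?thesis .
qed

lemma hfun_scale: "hfun (r *\<^sub>R v) = r *\<^sub>R hfun v"
proof -
  have "hfun (r *\<^sub>R v) = U (\<lambda>x. complex_of_real r * Lap X b m (Uinv v) x)"
    unfolding hfun_def Uinv_scale by (rule U_cong) (simp add: Lap_scale l2f_Uinv)
  also have "\<dots> = r *\<^sub>R hfun v"
    unfolding hfun_def by (rule U_scale) (auto intro: l2f_scale Lap_l2 l2f_Uinv)
  finally show ?thesis .
qed

lemma norm_hfun: "norm (hfun v) \<le> 2 * Dm * norm v"
proof -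
  have "(norm (hfun v))\<^sup>2 = (\<Sum>\<^sub>\<infinity>x\<in>X. m x * (cmod (Lap X b m (Uinv v) x))\<^sup>2)"
    unfolding hfun_def by (rule norm_U_sq) (rule Lap_l2(1)[OF l2f_Uinv])
  also have "\<dots> \<le> 4 * Dm\<^sup>2 * (\<Sum>\<^sub>\<infinity>x\<in>X. m x * (cmod (Uinv v x))\<^sup>2)"
    by (rule Lap_l2(2)[OF l2f_Uinv])
  also have "\<dots> \<le> 4 * Dm\<^sup>2 * (norm v)\<^sup>2"
    using sum_Uinv_le by (intro mult_left_mono) auto
  also have "\<dots> = (2 * Dm * norm v)\<^sup>2" by (simp add: power_mult_distrib)
  finally show ?thesis using Dm_pos by (simp add: power2_le_iff_abs_le)
qed

lemma bounded_linear_hfun: "bounded_linear hfun"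
proof (rule bounded_linear_intro[of _ "2 * Dm"])
  show "hfun (v + w) = hfun v + hfun w" for v w by (rule hfun_add)
  show "hfun (r *\<^sub>R v) = r *\<^sub>R hfun v" for r v by (rule hfun_scale)
  show "norm (hfun v) \<le> norm v * (2 * Dm)" for v using norm_hfun[of v] by (simp add: mult.commute)
qed

definition Hop :: "'a op" where "Hop = mkop hfun"

lemma Hop_apply: "blinfun_apply (opr Hop) v = hfun v"
  by (simp add: Hop_def mkop_apply bounded_linear_hfun)

lemma norm_Hop: "norm Hop \<le> 2 * Dm"
  unfolding Hop_def by (rule norm_mkop_le) (use bounded_linear_hfun norm_hfun Dm_pos in auto)

lemma Hop_U: "l2f f \<Longrightarrow> blinfun_apply (opr Hop) (U f) = U (Lap X b m f)"
  unfolding Hop_apply hfun_def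
  by (rule U_cong) (rule Lap_cong, auto simp: Uinv_U)

lemma Lap_pow: "l2f f \<Longrightarrow> l2f ((Lap X b m ^^ n) f) \<and> U ((Lap X b m ^^ n) f) = blinfun_apply (opr (Hop ^ n)) (U f)"
proof (induction n)
  case 0 thus ?case by (simp add: opr_one_apply)
next
  case (Suc n)
  hence IH: "l2f ((Lap X b m ^^ n) f)" "U ((Lap X b m ^^ n) f) = blinfun_apply (opr (Hop ^ n)) (U f)" by auto
  show ?case
  proof
    show "l2f ((Lap X b m ^^ Suc n) f)" using Lap_l2(1)[OF IH(1)] by simp
    have "U ((Lap X b m ^^ Suc n) f) = U (Lap X b m ((Lap X b m ^^ n) f))" by simp
    also have "\<dots> = blinfun_apply (opr Hop) (U ((Lap X b m ^^ n) f))" by (rule Hop_U[OF IH(1), symmetric])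
    also have "\<dots> = blinfun_apply (opr (Hop ^ Suc n)) (U f)" by (simp add: IH(2) opr_mult_apply)
    finally show "U ((Lap X b m ^^ Suc n) f) = blinfun_apply (opr (Hop ^ Suc n)) (U f)" .
  qed
qed

definition ev :: "'a L2 \<Rightarrow> 'a \<Rightarrow> 'a op \<Rightarrow> complex" where
  "ev v x Y = vec (blinfun_apply (opr Y) v) x / complex_of_real (sqrt (m x))"

lemma bounded_linear_ev: "bounded_linear (ev v x)"
proof -
  have 1: "bounded_linear (\<lambda>Y. vec (blinfun_apply (opr Y) v) x)"
    by (rule bounded_linear_compose[OF bounded_linear_vec[of x] bounded_linear_opr_apply[of v]])
  show ?thesis unfolding ev_def
    by (rule bounded_linear_compose[OF bounded_linear_divide 1])
qed

lemma heat_eq: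
  assumes f: "l2f f" and x: "x \<in> X"
  shows "heat_sg X b m t f x = ev (U f) x (exp ((-t) *\<^sub>R Hop))"
proof -
  have "(\<lambda>n. ev (U f) x (((-t) *\<^sub>R Hop) ^ n /\<^sub>R fact n)) sums ev (U f) x (exp ((-t) *\<^sub>R Hop))"
    by (rule bounded_linear.sums[OF bounded_linear_ev exp_converges])
  moreover have "ev (U f) x (((-t) *\<^sub>R Hop) ^ n /\<^sub>R fact n) = complex_of_real ((- t) ^ n / fact n) * (Lap X b m ^^ n) f x" for n
  proof -
    have "((-t) *\<^sub>R Hop) ^ n /\<^sub>R fact n = ((-t) ^ n / fact n) *\<^sub>R Hop ^ n"
      unfolding scaleR_power scaleR_scaleR by (simp add: field_simps)
    hence "ev (U f) x (((-t) *\<^sub>R Hop) ^ n /\<^sub>R fact n) = complex_of_real ((-t) ^ n / fact n) * ev (U f) x (Hop ^ n)"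
      by (simp add: ev_def opr_apply_simps)
    also have "ev (U f) x (Hop ^ n) = (Lap X b m ^^ n) f x"
    proof -
      have l: "l2f ((Lap X b m ^^ n) f)" and e: "blinfun_apply (opr (Hop ^ n)) (U f) = U ((Lap X b m ^^ n) f)"
        using Lap_pow[OF f, of n] by auto
      show ?thesis unfolding ev_def e using mpos[OF x] x by (simp add: vec_U[OF l])
    qed
    finally show ?thesis .
  qed
  ultimately show ?thesis unfolding heat_sg_def by (simp add: sums_iff)
qed

end


lemma summable_on_diff:
  fixes f g :: "'b \<Rightarrow> 'c::real_normed_vector"
  assumes "f summable_on A" "g summable_on A"
  shows "(\<lambda>x. f x - g x) summable_on A"
proof -
  have "(\<lambda>x. f x + - g x) summable_on A"
    by (intro summable_on_add summable_on_uminus[THEN iffD2] assms)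
  thus ?thesis by simp
qed

lemma infsum_diff:
  fixes f g :: "'b \<Rightarrow> 'c::real_normed_vector"
  assumes "f summable_on A" "g summable_on A"
  shows "(\<Sum>\<^sub>\<infinity>x\<in>A. f x - g x) = infsum f A - infsum g A"
proof -
  have "(\<Sum>\<^sub>\<infinity>x\<in>A. f x + - g x) = infsum f A + (\<Sum>\<^sub>\<infinity>x\<in>A. - g x)"
    by (intro infsum_add summable_on_uminus[THEN iffD2] assms)
  thus ?thesis by (simp add: infsum_uminus)
qed

lemma infsum_lin3:
  fixes a b c :: "'b \<Rightarrow> real"
  assumes "a summable_on A" "b summable_on A" "c summable_on A"
  shows "(\<Sum>\<^sub>\<infinity>y\<in>A. c1 * a y + c2 * b y - c3 * c y) = c1 * infsum a A + c2 * infsum b A - c3 * infsum c A"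
proof -
  have "(\<Sum>\<^sub>\<infinity>y\<in>A. c1 * a y + c2 * b y - c3 * c y) = (\<Sum>\<^sub>\<infinity>y\<in>A. c1 * a y + c2 * b y) - (\<Sum>\<^sub>\<infinity>y\<in>A. c3 * c y)"
    by (rule infsum_diff) (intro summable_on_add summable_on_cmult_right assms)+
  also have "(\<Sum>\<^sub>\<infinity>y\<in>A. c1 * a y + c2 * b y) = (\<Sum>\<^sub>\<infinity>y\<in>A. c1 * a y) + (\<Sum>\<^sub>\<infinity>y\<in>A. c2 * b y)"
    by (rule infsum_add) (intro summable_on_cmult_right assms)+
  also have "(\<Sum>\<^sub>\<infinity>y\<in>A. c1 * a y) = c1 * infsum a A" by (rule infsum_cmult_right) (rule assms)
  also have "(\<Sum>\<^sub>\<infinity>y\<in>A. c2 * b y) = c2 * infsum b A" by (rule infsum_cmult_right) (rule assms)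
  also have "(\<Sum>\<^sub>\<infinity>y\<in>A. c3 * c y) = c3 * infsum c A" by (rule infsum_cmult_right) (rule assms)
  finally show ?thesis .
qed

context wgraph
begin

lemma swapC:
  assumes f: "l2f f"
  shows "(\<lambda>x. \<Sum>\<^sub>\<infinity>y\<in>X. b x y * (cmod (f y))\<^sup>2) summable_on X"
    and "(\<Sum>\<^sub>\<infinity>x\<in>X. \<Sum>\<^sub>\<infinity>y\<in>X. b x y * (cmod (f y))\<^sup>2) = (\<Sum>\<^sub>\<infinity>y\<in>X. (\<Sum>\<^sub>\<infinity>x\<in>X. b y x) * (cmod (f y))\<^sup>2)"
proof -
  have fs: "(\<lambda>x. m x * (cmod (f x))\<^sup>2) summable_on X" using f by (simp add: l2f_def)
  have inner: "(\<lambda>x. b x y * (cmod (f y))\<^sup>2) summable_on X" if "y \<in> X" for y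
    using bsum'[OF that] by (rule summable_on_cmult_left)
  have eqy: "(\<Sum>\<^sub>\<infinity>x\<in>X. b x y * (cmod (f y))\<^sup>2) = (\<Sum>\<^sub>\<infinity>x\<in>X. b y x) * (cmod (f y))\<^sup>2" if y: "y \<in> X" for y
  proof -
    have "(\<Sum>\<^sub>\<infinity>x\<in>X. b x y * (cmod (f y))\<^sup>2) = (\<Sum>\<^sub>\<infinity>x\<in>X. b x y) * (cmod (f y))\<^sup>2"
      using bsum'[OF y] by (rule infsum_cmult_left)
    also have "(\<Sum>\<^sub>\<infinity>x\<in>X. b x y) = (\<Sum>\<^sub>\<infinity>x\<in>X. b y x)"
      by (rule infsum_cong) (simp add: bsym y)
    finally show ?thesis .
  qed
  have bnd_y: "(\<Sum>\<^sub>\<infinity>x\<in>X. b x y * (cmod (f y))\<^sup>2) \<le> Dm * (m y * (cmod (f y))\<^sup>2)" if y: "y \<in> X" for y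
    unfolding eqy[OF y] using deg_bound[OF y] by (simp add: mult_right_mono mult.assoc[symmetric])
  have outer: "(\<lambda>y. \<Sum>\<^sub>\<infinity>x\<in>X. b x y * (cmod (f y))\<^sup>2) summable_on X"
  proof (rule summable_on_comparison_test)
    show "(\<lambda>y. Dm * (m y * (cmod (f y))\<^sup>2)) summable_on X" using fs by (rule summable_on_cmult_right)
  qed (use bnd_y bnn in \<open>auto intro!: infsum_nonneg\<close>)
  have sw: "(\<lambda>x. \<Sum>\<^sub>\<infinity>y\<in>X. b x y * (cmod (f y))\<^sup>2) summable_on X \<and>
     (\<Sum>\<^sub>\<infinity>y\<in>X. \<Sum>\<^sub>\<infinity>x\<in>X. b x y * (cmod (f y))\<^sup>2) = (\<Sum>\<^sub>\<infinity>x\<in>X. \<Sum>\<^sub>\<infinity>y\<in>X. b x y * (cmod (f y))\<^sup>2)"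
    using nonneg_swap[of X X "\<lambda>y x. b x y * (cmod (f y))\<^sup>2", OF _ inner outer] bnn by auto
  show "(\<lambda>x. \<Sum>\<^sub>\<infinity>y\<in>X. b x y * (cmod (f y))\<^sup>2) summable_on X" using sw by simp
  have "(\<Sum>\<^sub>\<infinity>x\<in>X. \<Sum>\<^sub>\<infinity>y\<in>X. b x y * (cmod (f y))\<^sup>2) = (\<Sum>\<^sub>\<infinity>y\<in>X. \<Sum>\<^sub>\<infinity>x\<in>X. b x y * (cmod (f y))\<^sup>2)"
    using sw by simp
  also have "\<dots> = (\<Sum>\<^sub>\<infinity>y\<in>X. (\<Sum>\<^sub>\<infinity>x\<in>X. b y x) * (cmod (f y))\<^sup>2)"
    by (rule infsum_cong) (rule eqy)
  finally show "(\<Sum>\<^sub>\<infinity>x\<in>X. \<Sum>\<^sub>\<infinity>y\<in>X. b x y * (cmod (f y))\<^sup>2) = (\<Sum>\<^sub>\<infinity>y\<in>X. (\<Sum>\<^sub>\<infinity>x\<in>X. b y x) * (cmod (f y))\<^sup>2)" .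
qed

definition Efun :: "('a \<Rightarrow> complex) \<Rightarrow> 'a \<Rightarrow> real" where
  "Efun f x = (\<Sum>\<^sub>\<infinity>y\<in>X. b x y * (cmod (f x - f y))\<^sup>2)"

lemma re_identity:
  "Re (cnj a * (a - c)) = (1/2) * (cmod (a - c))\<^sup>2 + (1/2) * (cmod a)\<^sup>2 - (1/2) * (cmod c)\<^sup>2"
  unfolding cmod_power2 by (simp add: power2_eq_square algebra_simps)

lemma E_facts:
  assumes f: "l2f f"
  shows "\<And>x. x \<in> X \<Longrightarrow> (\<lambda>y. b x y * (cmod (f x - f y))\<^sup>2) summable_on X"
    and "Efun f summable_on X"
    and "\<And>x. x \<in> X \<Longrightarrow> 0 \<le> Efun f x"
proof -
  have B: "(\<lambda>y. b x y * (cmod (f x))\<^sup>2) summable_on X" if "x \<in> X" for x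
    using bsum[OF that] by (rule summable_on_cmult_left)
  have pt: "b x y * (cmod (f x - f y))\<^sup>2 \<le> 2 * (b x y * (cmod (f x))\<^sup>2) + 2 * (b x y * (cmod (f y))\<^sup>2)"
    if "x \<in> X" "y \<in> X" for x y
  proof -
    have "(cmod (f x - f y))\<^sup>2 \<le> (cmod (f x) + cmod (f y))\<^sup>2"
      by (simp add: power_mono norm_triangle_ineq4)
    also have "\<dots> \<le> 2 * (cmod (f x))\<^sup>2 + 2 * (cmod (f y))\<^sup>2" by (rule sq_sum_le)
    finally show ?thesis using bnn[OF that]
      by (metis (no_types, opaque_lifting) distrib_left mult.left_commute mult_left_mono)
  qed
  show S: "(\<lambda>y. b x y * (cmod (f x - f y))\<^sup>2) summable_on X" if x: "x \<in> X" for x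
    by (rule summable_on_comparison_test[OF summable_on_add[OF summable_on_cmult_right[OF B[OF x]] summable_on_cmult_right[OF l2f_b_sq[OF x f]]]])
       (use pt x bnn in auto)
  show nn: "0 \<le> Efun f x" if "x \<in> X" for x
    unfolding Efun_def by (rule infsum_nonneg) (use bnn that in auto)
  have Bsum: "(\<lambda>x. (\<Sum>\<^sub>\<infinity>y\<in>X. b x y) * (cmod (f x))\<^sup>2) summable_on X"
  proof (rule summable_on_comparison_test)
    show "(\<lambda>x. Dm * (m x * (cmod (f x))\<^sup>2)) summable_on X"
      using f unfolding l2f_def by (rule summable_on_cmult_right)
    show "(\<Sum>\<^sub>\<infinity>y\<in>X. b x y) * (cmod (f x))\<^sup>2 \<le> Dm * (m x * (cmod (f x))\<^sup>2)" if "x \<in> X" for x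
      using deg_bound[OF that] by (simp add: mult_right_mono mult.assoc[symmetric])
    show "0 \<le> (\<Sum>\<^sub>\<infinity>y\<in>X. b x y) * (cmod (f x))\<^sup>2" if "x \<in> X" for x
      using bnn that by (auto intro!: mult_nonneg_nonneg infsum_nonneg)
  qed
  have Ebound: "Efun f x \<le> 2 * ((\<Sum>\<^sub>\<infinity>y\<in>X. b x y) * (cmod (f x))\<^sup>2) + 2 * (\<Sum>\<^sub>\<infinity>y\<in>X. b x y * (cmod (f y))\<^sup>2)"
    if x: "x \<in> X" for x
  proof -
    have "Efun f x \<le> (\<Sum>\<^sub>\<infinity>y\<in>X. 2 * (b x y * (cmod (f x))\<^sup>2) + 2 * (b x y * (cmod (f y))\<^sup>2))"
      unfolding Efun_def
      by (rule infsum_mono[OF S[OF x] summable_on_add[OF summable_on_cmult_right[OF B[OF x]] summable_on_cmult_right[OF l2f_b_sq[OF x f]]]])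
         (use pt x in auto)
    also have "\<dots> = 2 * (\<Sum>\<^sub>\<infinity>y\<in>X. b x y * (cmod (f x))\<^sup>2) + 2 * (\<Sum>\<^sub>\<infinity>y\<in>X. b x y * (cmod (f y))\<^sup>2)"
      by (simp add: infsum_add summable_on_cmult_right B[OF x] l2f_b_sq[OF x f] infsum_cmult_right)
    also have "(\<Sum>\<^sub>\<infinity>y\<in>X. b x y * (cmod (f x))\<^sup>2) = (\<Sum>\<^sub>\<infinity>y\<in>X. b x y) * (cmod (f x))\<^sup>2"
      using bsum[OF x] by (rule infsum_cmult_left)
    finally show ?thesis .
  qed
  show "Efun f summable_on X"
    by (rule summable_on_comparison_test[OF summable_on_add[OF summable_on_cmult_right[OF Bsum] summable_on_cmult_right[OF swapC(1)[OF f]]]])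
       (use Ebound nn in auto)
qed

lemma inner_hfun:
  "inner (hfun v) v = (1/2) * (\<Sum>\<^sub>\<infinity>x\<in>X. Efun (Uinv v) x)"
proof -
  define f where "f = Uinv v"
  have f: "l2f f" unfolding f_def by (rule l2f_Uinv)
  have vx: "vec v x = complex_of_real (sqrt (m x)) * f x" if "x \<in> X" for x
    using mpos[OF that] by (simp add: f_def Uinv_def)
  have B: "(\<lambda>y. b x y * (cmod (f x))\<^sup>2) summable_on X" if "x \<in> X" for x
    using bsum[OF that] by (rule summable_on_cmult_left)
  have step1: "inner (hfun v) v = (\<Sum>\<^sub>\<infinity>x\<in>X. Re (cnj (f x) * (\<Sum>\<^sub>\<infinity>y\<in>X. complex_of_real (b x y) * (f x - f y))))"
  proof -
    have h1: "Re (vec (hfun v) x * cnj (vec v x)) = Re (cnj (f x) * (\<Sum>\<^sub>\<infinity>y\<in>X. complex_of_real (b x y) * (f x - f y)))"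
      if x: "x \<in> X" for x
    proof -
      have "vec (hfun v) x = complex_of_real (sqrt (m x)) * Lap X b m f x"
        unfolding hfun_def f_def using x by (simp add: vec_U Lap_l2 l2f_Uinv)
      moreover have "complex_of_real (sqrt (m x)) * complex_of_real (sqrt (m x)) = complex_of_real (m x)"
        using x mpos[of x] by (simp flip: of_real_mult)
      ultimately have "vec (hfun v) x * cnj (vec v x) = complex_of_real (m x) * (Lap X b m f x * cnj (f x))"
        using x vx[of x] by (simp add: algebra_simps)
      also have "\<dots> = cnj (f x) * (\<Sum>\<^sub>\<infinity>y\<in>X. complex_of_real (b x y) * (f x - f y))"
        using mpos[of x] x by (simp add: Lap_def field_simps)
      finally show ?thesis by simp
    qed
    have h2: "Re (vec (hfun v) x * cnj (vec v x)) = 0" if "x \<notin> X" for x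
      unfolding hfun_def using that by (simp add: vec_U Lap_l2 l2f_Uinv)
    show ?thesis unfolding inner_L2_def
      by (rule infsum_cong_neutral) (use h1 h2 in auto)
  qed
  have step2: "Re (cnj (f x) * (\<Sum>\<^sub>\<infinity>y\<in>X. complex_of_real (b x y) * (f x - f y))) =
      (1/2) * Efun f x + (1/2) * ((\<Sum>\<^sub>\<infinity>y\<in>X. b x y) * (cmod (f x))\<^sup>2) - (1/2) * (\<Sum>\<^sub>\<infinity>y\<in>X. b x y * (cmod (f y))\<^sup>2)"
    if x: "x \<in> X" for x
  proof -
    have "cnj (f x) * (\<Sum>\<^sub>\<infinity>y\<in>X. complex_of_real (b x y) * (f x - f y)) = (\<Sum>\<^sub>\<infinity>y\<in>X. cnj (f x) * (complex_of_real (b x y) * (f x - f y)))"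
      by (rule infsum_cmult_right[symmetric]) (rule lap_summable[OF x f])
    moreover have "(\<lambda>y. cnj (f x) * (complex_of_real (b x y) * (f x - f y))) summable_on X"
      by (rule summable_on_cmult_right) (rule lap_summable[OF x f])
    ultimately have "Re (cnj (f x) * (\<Sum>\<^sub>\<infinity>y\<in>X. complex_of_real (b x y) * (f x - f y))) = (\<Sum>\<^sub>\<infinity>y\<in>X. Re (cnj (f x) * (complex_of_real (b x y) * (f x - f y))))"
      by (metis infsum_Re)
    also have "\<dots> = (\<Sum>\<^sub>\<infinity>y\<in>X. (1/2) * (b x y * (cmod (f x - f y))\<^sup>2) + (1/2) * (b x y * (cmod (f x))\<^sup>2) - (1/2) * (b x y * (cmod (f y))\<^sup>2))"
    proof (rule infsum_cong)
      fix y
      have "Re (cnj (f x) * (complex_of_real (b x y) * (f x - f y))) = b x y * Re (cnj (f x) * (f x - f y))"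
        by (simp add: algebra_simps)
      thus "Re (cnj (f x) * (complex_of_real (b x y) * (f x - f y))) = (1/2) * (b x y * (cmod (f x - f y))\<^sup>2) + (1/2) * (b x y * (cmod (f x))\<^sup>2) - (1/2) * (b x y * (cmod (f y))\<^sup>2)"
        by (simp only: re_identity) (simp add: algebra_simps)
    qed
    also have "\<dots> = (1/2) * Efun f x + (1/2) * (\<Sum>\<^sub>\<infinity>y\<in>X. b x y * (cmod (f x))\<^sup>2) - (1/2) * (\<Sum>\<^sub>\<infinity>y\<in>X. b x y * (cmod (f y))\<^sup>2)"
      unfolding Efun_def
      by (rule infsum_lin3[OF E_facts(1)[OF f x] B[OF x] l2f_b_sq[OF x f]])
    also have "(\<Sum>\<^sub>\<infinity>y\<in>X. b x y * (cmod (f x))\<^sup>2) = (\<Sum>\<^sub>\<infinity>y\<in>X. b x y) * (cmod (f x))\<^sup>2"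
      using bsum[OF x] by (rule infsum_cmult_left)
    finally show ?thesis .
  qed
  have Bsum: "(\<lambda>x. (\<Sum>\<^sub>\<infinity>y\<in>X. b x y) * (cmod (f x))\<^sup>2) summable_on X"
  proof (rule summable_on_comparison_test)
    show "(\<lambda>x. Dm * (m x * (cmod (f x))\<^sup>2)) summable_on X"
      using f unfolding l2f_def by (rule summable_on_cmult_right)
    show "(\<Sum>\<^sub>\<infinity>y\<in>X. b x y) * (cmod (f x))\<^sup>2 \<le> Dm * (m x * (cmod (f x))\<^sup>2)" if "x \<in> X" for x
      using deg_bound[OF that] by (simp add: mult_right_mono mult.assoc[symmetric])
    show "0 \<le> (\<Sum>\<^sub>\<infinity>y\<in>X. b x y) * (cmod (f x))\<^sup>2" if "x \<in> X" for x
      using bnn that by (auto intro!: mult_nonneg_nonneg infsum_nonneg)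
  qed
  have "inner (hfun v) v = (\<Sum>\<^sub>\<infinity>x\<in>X. (1/2) * Efun f x + (1/2) * ((\<Sum>\<^sub>\<infinity>y\<in>X. b x y) * (cmod (f x))\<^sup>2) - (1/2) * (\<Sum>\<^sub>\<infinity>y\<in>X. b x y * (cmod (f y))\<^sup>2))"
    unfolding step1 by (rule infsum_cong) (rule step2)
  also have "\<dots> = (1/2) * (\<Sum>\<^sub>\<infinity>x\<in>X. Efun f x) + (1/2) * (\<Sum>\<^sub>\<infinity>x\<in>X. (\<Sum>\<^sub>\<infinity>y\<in>X. b x y) * (cmod (f x))\<^sup>2) - (1/2) * (\<Sum>\<^sub>\<infinity>x\<in>X. \<Sum>\<^sub>\<infinity>y\<in>X. b x y * (cmod (f y))\<^sup>2)"
    by (rule infsum_lin3[OF E_facts(2)[OF f] Bsum swapC(1)[OF f]])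
  also have "(\<Sum>\<^sub>\<infinity>x\<in>X. \<Sum>\<^sub>\<infinity>y\<in>X. b x y * (cmod (f y))\<^sup>2) = (\<Sum>\<^sub>\<infinity>x\<in>X. (\<Sum>\<^sub>\<infinity>y\<in>X. b x y) * (cmod (f x))\<^sup>2)"
    by (rule swapC(2)[OF f])
  finally show ?thesis by (simp add: f_def)
qed

end


lemma len1_hd_last: "length xs = 1 \<Longrightarrow> hd xs = last xs"
proof -
  assume "length xs = 1"
  then obtain a ys where "xs = a # ys" "length ys = 0" by (cases xs) auto
  thus ?thesis by simp
qed

locale ctrl = wgraph X b m for X :: "'a set" and b m +
  fixes D :: "'a set"
  assumes DX: "D \<subset> X" and conn: "graph_connected X b" and dense: "relatively_dense X (dL X b) D"
begin

lemma DsubX: "D \<subseteq> X" using DX by auto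

definition "Rd = (SOME R. R > 0 \<and> (\<Union>x\<in>D. closed_ball_in X (dL X b) x R) = X)"

lemma Rd: "Rd > 0" "(\<Union>x\<in>D. closed_ball_in X (dL X b) x Rd) = X"
proof -
  have "\<exists>R. R > 0 \<and> (\<Union>x\<in>D. closed_ball_in X (dL X b) x R) = X"
    using dense by (simp add: relatively_dense_def)
  hence "Rd > 0 \<and> (\<Union>x\<in>D. closed_ball_in X (dL X b) x Rd) = X"
    unfolding Rd_def by (rule someI_ex)
  thus "Rd > 0" "(\<Union>x\<in>D. closed_ball_in X (dL X b) x Rd) = X" by auto
qed

definition "R1 = Rd + 1"
definition "K0 = nat \<lceil>R1 * Dm * Mm\<rceil>"

lemma R1_pos: "R1 > 0" using Rd by (simp add: R1_def)

definition heavy :: "'a list \<Rightarrow> bool" where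
  "heavy xs \<longleftrightarrow> is_path X b xs \<and> (\<forall>i. Suc i < length xs \<longrightarrow> 1 / R1 \<le> b (xs ! i) (xs ! Suc i))"

lemma heavy_path_exists:
  assumes x: "x \<in> X"
  shows "\<exists>xs. heavy xs \<and> hd xs \<in> D \<and> last xs = x \<and> length xs \<le> Suc K0"
proof -
  obtain y where y: "y \<in> D" "x \<in> closed_ball_in X (dL X b) y Rd"
    using Rd(2) x by blast
  have yX: "y \<in> X" using y DsubX by auto
  have dle: "dL X b y x \<le> Rd" using y by (simp add: closed_ball_in_def)
  show ?thesis
  proof (cases "y = x")
    case True
    have "heavy [x]" using x by (simp add: heavy_def is_path_def)
    thus ?thesis using True y by (intro exI[of _ "[x]"]) auto
  next
    case False
    let ?P = "{path_length b xs | xs. path_from_to X b y x xs}"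
    have ne: "?P \<noteq> {}" using conn False yX x by (auto simp: graph_connected_def)
    have "Inf ?P < R1" using dle False by (simp add: dL_def R1_def)
    then obtain l where "l \<in> ?P" "l < R1" using cInf_lessD[OF ne] by blast
    then obtain xs where xs: "path_from_to X b y x xs" "path_length b xs < R1" by auto
    have p: "is_path X b xs" "hd xs = y" "last xs = x" using xs by (auto simp: path_from_to_def)
    have ne_xs: "xs \<noteq> []" and setX: "set xs \<subseteq> X" and pos: "\<And>i. Suc i < length xs \<Longrightarrow> 0 < b (xs ! i) (xs ! Suc i)"
      using p(1) by (auto simp: is_path_def)
    have term_le: "1 / b (xs ! i) (xs ! Suc i) \<le> path_length b xs" if i: "Suc i < length xs" for i
    proof -
      have "(\<Sum>k\<in>{i}. 1 / b (xs ! k) (xs ! Suc k)) \<le> (\<Sum>k<length xs - 1. 1 / b (xs ! k) (xs ! Suc k))"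
        by (rule sum_mono2) (use i pos in \<open>auto intro: less_imp_le\<close>)
      thus ?thesis by (simp add: path_length_def)
    qed
    have hv: "heavy xs"
      unfolding heavy_def
    proof (intro conjI allI impI)
      show "is_path X b xs" by (rule p(1))
      fix i assume i: "Suc i < length xs"
      have "1 / b (xs ! i) (xs ! Suc i) < R1" using term_le[OF i] xs(2) by simp
      thus "1 / R1 \<le> b (xs ! i) (xs ! Suc i)"
        using pos[OF i] R1_pos by (simp add: field_simps)
    qed
    have inX: "xs ! k \<in> X" if "k < length xs" for k using setX that by auto
    have low: "1 / (Dm * Mm) \<le> 1 / b (xs ! i) (xs ! Suc i)" if i: "Suc i < length xs" for i
    proof -
      have "b (xs ! i) (xs ! Suc i) \<le> Dm * m (xs ! i)" by (rule b_le) (use i inX in auto)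
      also have "\<dots> \<le> Dm * Mm" using m_le[of "xs ! i"] inX[of i] i Dm_pos by (intro mult_left_mono) auto
      finally show ?thesis using pos[OF i] by (intro divide_left_mono) auto
    qed
    have "real (length xs - 1) * (1 / (Dm * Mm)) = (\<Sum>k<length xs - 1. 1 / (Dm * Mm))" by simp
    also have "\<dots> \<le> path_length b xs"
      unfolding path_length_def by (rule sum_mono) (use low in auto)
    also have "\<dots> < R1" by (rule xs(2))
    finally have "real (length xs - 1) < R1 * (Dm * Mm)"
      using Dm_pos Mm_pos by (simp add: field_simps)
    hence "real (length xs - 1) < real K0 + 1"
    proof -
      have "R1 * (Dm * Mm) \<le> of_int \<lceil>R1 * Dm * Mm\<rceil>" by (simp add: mult.assoc)
      moreover have "of_int \<lceil>R1 * Dm * Mm\<rceil> = real K0"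
        unfolding K0_def using Dm_pos Mm_pos R1_pos by (simp add: less_imp_le)
      ultimately show ?thesis using \<open>real (length xs - 1) < R1 * (Dm * Mm)\<close> by simp
    qed
    hence "length xs \<le> Suc K0" by linarith
    thus ?thesis using hv p y by blast
  qed
qed

definition Lay :: "nat \<Rightarrow> 'a set" where
  "Lay j = {x \<in> X. \<exists>xs. heavy xs \<and> hd xs \<in> D \<and> last xs = x \<and> length xs \<le> Suc j}"

lemma Lay_sub: "Lay j \<subseteq> X" by (auto simp: Lay_def)

lemma Lay_top: "Lay K0 = X"
  using heavy_path_exists by (auto simp: Lay_def)

lemma Lay0: "Lay 0 \<subseteq> D"
proof
  fix x assume "x \<in> Lay 0"
  then obtain xs where xs: "heavy xs" "hd xs \<in> D" "last xs = x" "length xs \<le> 1"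
    by (auto simp: Lay_def)
  have "xs \<noteq> []" using xs(1) by (simp add: heavy_def is_path_def)
  hence "length xs \<noteq> 0" by simp
  hence "length xs = 1" using xs(4) by linarith
  hence "hd xs = last xs" by (rule len1_hd_last)
  thus "x \<in> D" using xs by simp
qed

lemma Lay_parent:
  assumes "x \<in> Lay (Suc j)" "x \<notin> D"
  shows "\<exists>p \<in> Lay j. 1 / R1 \<le> b p x"
proof -
  obtain xs where xs: "heavy xs" "hd xs \<in> D" "last xs = x" "length xs \<le> Suc (Suc j)"
    using assms(1) by (auto simp: Lay_def)
  have ne: "xs \<noteq> []" using xs(1) by (simp add: heavy_def is_path_def)
  have len: "length xs \<ge> 2"
  proof (rule ccontr)
    assume "\<not> length xs \<ge> 2"
    moreover have "length xs \<noteq> 0" using ne by simp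
    ultimately have "length xs = 1" by linarith
    hence "hd xs = last xs" by (rule len1_hd_last)
    thus False using xs assms(2) by simp
  qed
  define n where "n = length xs"
  have n2: "n \<ge> 2" using len by (simp add: n_def)
  define ys where "ys = butlast xs"
  define p where "p = xs ! (n - 2)"
  have setX: "set xs \<subseteq> X" using xs(1) by (simp add: heavy_def is_path_def)
  have ysn: "length ys = n - 1" by (simp add: ys_def n_def)
  have ys_nth: "ys ! i = xs ! i" if "i < n - 1" for i
    unfolding ys_def using that by (simp add: nth_butlast n_def)
  have ys_ne: "ys \<noteq> []" using n2 ysn by auto
  have hy: "heavy ys"
    unfolding heavy_def is_path_def
  proof (intro conjI allI impI)
    show "ys \<noteq> []" by (rule ys_ne)
    show "set ys \<subseteq> X"
    proof
      fix z assume "z \<in> set ys"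
      hence "z \<in> set xs" unfolding ys_def by (rule in_set_butlastD)
      thus "z \<in> X" using setX by auto
    qed
    fix i assume i: "Suc i < length ys"
    hence i1: "Suc i < length xs" "i < n - 1" "Suc i < n - 1" using ysn by (auto simp: n_def)
    have "1 / R1 \<le> b (xs ! i) (xs ! Suc i)" using xs(1) i1(1) by (simp add: heavy_def)
    thus "1 / R1 \<le> b (ys ! i) (ys ! Suc i)" using ys_nth[OF i1(2)] ys_nth[OF i1(3)] by simp
    have "0 < b (xs ! i) (xs ! Suc i)" using xs(1) i1(1) by (simp add: heavy_def is_path_def)
    thus "0 < b (ys ! i) (ys ! Suc i)" using ys_nth[OF i1(2)] ys_nth[OF i1(3)] by simp
  qed
  have "hd ys = ys ! 0" by (rule hd_conv_nth[OF ys_ne])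
  also have "\<dots> = xs ! 0" by (rule ys_nth) (use n2 in simp)
  also have "\<dots> = hd xs" by (rule hd_conv_nth[OF ne, symmetric])
  finally have h1: "hd ys = hd xs" .
  have "last ys = ys ! (length ys - 1)" by (rule last_conv_nth[OF ys_ne])
  also have "length ys - 1 = n - 2" using ysn by simp
  also have "ys ! (n - 2) = xs ! (n - 2)" by (rule ys_nth) (use n2 in simp)
  finally have h2: "last ys = p" by (simp add: p_def)
  have h3: "length ys \<le> Suc j" using ysn xs(4) by (simp add: n_def)
  have h4: "p \<in> X" using setX n2 nth_mem[of "n - 2" xs] by (auto simp: p_def n_def)
  have pL: "p \<in> Lay j" unfolding Lay_def using hy xs(2) h1 h2 h3 h4 by auto
  have sn: "Suc (n - 2) = n - 1" using n2 by simp
  have "1 / R1 \<le> b (xs ! (n - 2)) (xs ! Suc (n - 2))"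
    using xs(1) n2 by (simp add: heavy_def n_def)
  moreover have "xs ! Suc (n - 2) = x"
    unfolding sn using xs(3) last_conv_nth[OF ne] by (simp add: n_def)
  ultimately show ?thesis using pL by (auto simp: p_def)
qed

lemma gsum_sub: "l2f f \<Longrightarrow> S \<subseteq> X \<Longrightarrow> (\<lambda>x. m x * (cmod (f x))\<^sup>2) summable_on S"
  unfolding l2f_def by (rule summable_on_subset_banach)

lemma l2f_restrict: "l2f f \<Longrightarrow> l2f (\<lambda>z. if z \<in> S then f z else 0)"
  unfolding l2f_def
  by (rule summable_on_comparison_test) (auto intro: l2_nn)

lemma gsum_nn: "S \<subseteq> X \<Longrightarrow> 0 \<le> (\<Sum>\<^sub>\<infinity>x\<in>S. m x * (cmod (f x))\<^sup>2)"
  by (rule infsum_nonneg) (auto intro: l2_nn)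

lemma Esum_nn: "l2f f \<Longrightarrow> 0 \<le> (\<Sum>\<^sub>\<infinity>x\<in>X. Efun f x)"
  by (rule infsum_nonneg) (rule E_facts(3))

lemma layer_step:
  assumes f: "l2f f"
  shows "(\<Sum>\<^sub>\<infinity>x\<in>Lay (Suc j). m x * (cmod (f x))\<^sup>2) \<le>
    (\<Sum>\<^sub>\<infinity>x\<in>D. m x * (cmod (f x))\<^sup>2) + 2 * Mm * R1 * (Dm * (\<Sum>\<^sub>\<infinity>x\<in>Lay j. m x * (cmod (f x))\<^sup>2) + (\<Sum>\<^sub>\<infinity>x\<in>X. Efun f x))"
proof -
  define fj where "fj z = (if z \<in> Lay j then f z else 0)" for z
  have fj: "l2f fj" unfolding fj_def by (rule l2f_restrict[OF f])
  define G where "G x = (\<Sum>\<^sub>\<infinity>z\<in>X. b x z * (cmod (fj z))\<^sup>2)" for x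
  define c where "c = 2 * Mm * R1"
  have c0: "0 \<le> c" using Mm_pos R1_pos by (simp add: c_def)
  have G0: "0 \<le> G x" if "x \<in> X" for x
    unfolding G_def by (rule infsum_nonneg) (use bnn that in auto)
  have Gs: "G summable_on X" unfolding G_def by (rule swapC(1)[OF fj])
  have Es: "Efun f summable_on X" by (rule E_facts(2)[OF f])
  have pt: "m x * (cmod (f x))\<^sup>2 \<le> c * (G x + Efun f x)" if x: "x \<in> Lay (Suc j) - D" for x
  proof -
    have xX: "x \<in> X" using x Lay_sub by auto
    obtain p where p: "p \<in> Lay j" "1 / R1 \<le> b p x" using Lay_parent[of x j] x by auto
    have pX: "p \<in> X" using p Lay_sub by auto
    have bxp: "1 / R1 \<le> b x p" using p(2) bsym[OF xX pX] by simp
    hence one: "1 \<le> R1 * b x p" using R1_pos by (simp add: field_simps)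
    have bp0: "0 \<le> b x p" using bnn xX pX by simp
    have sq: "(cmod (f x))\<^sup>2 \<le> 2 * (cmod (f p))\<^sup>2 + 2 * (cmod (f x - f p))\<^sup>2"
    proof -
      have "cmod (f x) \<le> cmod (f p) + cmod (f x - f p)" by (metis norm_triangle_sub add.commute)
      hence "(cmod (f x))\<^sup>2 \<le> (cmod (f p) + cmod (f x - f p))\<^sup>2" by (simp add: power_mono)
      also have "\<dots> \<le> 2 * (cmod (f p))\<^sup>2 + 2 * (cmod (f x - f p))\<^sup>2" by (rule sq_sum_le)
      finally show ?thesis .
    qed
    have "m x * (cmod (f x))\<^sup>2 \<le> Mm * (cmod (f x))\<^sup>2"
      using m_le[OF xX] by (simp add: mult_right_mono)
    also have "\<dots> \<le> Mm * ((R1 * b x p) * (cmod (f x))\<^sup>2)"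
      using one Mm_pos by (intro mult_left_mono) (auto simp: mult_le_cancel_right1)
    also have "\<dots> \<le> Mm * (R1 * b x p * (2 * (cmod (f p))\<^sup>2 + 2 * (cmod (f x - f p))\<^sup>2))"
      using sq Mm_pos R1_pos bp0 by (intro mult_left_mono) auto
    also have "\<dots> = c * (b x p * (cmod (fj p))\<^sup>2 + b x p * (cmod (f x - f p))\<^sup>2)"
      using p(1) by (simp add: c_def fj_def algebra_simps)
    also have "\<dots> \<le> c * (G x + Efun f x)"
    proof (intro mult_left_mono add_mono c0)
      have "(\<Sum>z\<in>{p}. b x z * (cmod (fj z))\<^sup>2) \<le> G x"
        unfolding G_def by (rule finite_sum_le_infsum) (use l2f_b_sq[OF xX fj] bnn xX pX in auto)
      thus "b x p * (cmod (fj p))\<^sup>2 \<le> G x" by simp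
      have "(\<Sum>z\<in>{p}. b x z * (cmod (f x - f z))\<^sup>2) \<le> Efun f x"
        unfolding Efun_def by (rule finite_sum_le_infsum) (use E_facts(1)[OF f xX] bnn xX pX in auto)
      thus "b x p * (cmod (f x - f p))\<^sup>2 \<le> Efun f x" by simp
    qed
    finally show ?thesis .
  qed
  have A: "(\<Sum>\<^sub>\<infinity>x\<in>Lay (Suc j) - D. m x * (cmod (f x))\<^sup>2) \<le> (\<Sum>\<^sub>\<infinity>x\<in>X. c * (G x + Efun f x))"
  proof (rule infsum_mono_neutral)
    show "(\<lambda>x. m x * (cmod (f x))\<^sup>2) summable_on Lay (Suc j) - D"
      by (rule gsum_sub[OF f]) (use Lay_sub in auto)
    show "(\<lambda>x. c * (G x + Efun f x)) summable_on X"
      by (intro summable_on_cmult_right summable_on_add Gs Es)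
    show "m x * (cmod (f x))\<^sup>2 \<le> c * (G x + Efun f x)" if "x \<in> (Lay (Suc j) - D) \<inter> X" for x
      using pt that by auto
    show "m x * (cmod (f x))\<^sup>2 \<le> 0" if "x \<in> (Lay (Suc j) - D) - X" for x
      using that Lay_sub by auto
    show "0 \<le> c * (G x + Efun f x)" if "x \<in> X - (Lay (Suc j) - D)" for x
      using that c0 G0 E_facts(3)[OF f] by auto
  qed
  also have "\<dots> = c * ((\<Sum>\<^sub>\<infinity>x\<in>X. G x) + (\<Sum>\<^sub>\<infinity>x\<in>X. Efun f x))"
    by (subst infsum_cmult_right) (auto intro: summable_on_add Gs Es simp: infsum_add Gs Es)
  also have "(\<Sum>\<^sub>\<infinity>x\<in>X. G x) \<le> Dm * (\<Sum>\<^sub>\<infinity>x\<in>Lay j. m x * (cmod (f x))\<^sup>2)"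
  proof -
    have "(\<Sum>\<^sub>\<infinity>x\<in>X. G x) = (\<Sum>\<^sub>\<infinity>z\<in>X. (\<Sum>\<^sub>\<infinity>x\<in>X. b z x) * (cmod (fj z))\<^sup>2)"
      unfolding G_def by (rule swapC(2)[OF fj])
    also have "\<dots> \<le> (\<Sum>\<^sub>\<infinity>z\<in>X. Dm * (m z * (cmod (fj z))\<^sup>2))"
    proof (rule infsum_mono)
      show "(\<lambda>z. (\<Sum>\<^sub>\<infinity>x\<in>X. b z x) * (cmod (fj z))\<^sup>2) summable_on X"
      proof (rule summable_on_comparison_test)
        show "(\<lambda>z. Dm * (m z * (cmod (fj z))\<^sup>2)) summable_on X"
          using fj unfolding l2f_def by (rule summable_on_cmult_right)
      qed (use deg_bound bnn in \<open>auto intro!: mult_right_mono mult_nonneg_nonneg infsum_nonneg simp: mult.assoc[symmetric]\<close>)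
      show "(\<lambda>z. Dm * (m z * (cmod (fj z))\<^sup>2)) summable_on X"
        using fj unfolding l2f_def by (rule summable_on_cmult_right)
      show "(\<Sum>\<^sub>\<infinity>x\<in>X. b z x) * (cmod (fj z))\<^sup>2 \<le> Dm * (m z * (cmod (fj z))\<^sup>2)" if "z \<in> X" for z
        using deg_bound[OF that] by (simp add: mult_right_mono mult.assoc[symmetric])
    qed
    also have "\<dots> = Dm * (\<Sum>\<^sub>\<infinity>z\<in>X. m z * (cmod (fj z))\<^sup>2)"
      using fj unfolding l2f_def by (rule infsum_cmult_right)
    also have "(\<Sum>\<^sub>\<infinity>z\<in>X. m z * (cmod (fj z))\<^sup>2) = (\<Sum>\<^sub>\<infinity>x\<in>Lay j. m x * (cmod (f x))\<^sup>2)"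
      by (rule infsum_cong_neutral) (use Lay_sub in \<open>auto simp: fj_def\<close>)
    finally show ?thesis .
  qed
  finally have A': "(\<Sum>\<^sub>\<infinity>x\<in>Lay (Suc j) - D. m x * (cmod (f x))\<^sup>2) \<le>
      c * (Dm * (\<Sum>\<^sub>\<infinity>x\<in>Lay j. m x * (cmod (f x))\<^sup>2) + (\<Sum>\<^sub>\<infinity>x\<in>X. Efun f x))"
    using c0 by (simp add: mult_left_mono)
  have split: "(\<Sum>\<^sub>\<infinity>x\<in>Lay (Suc j). m x * (cmod (f x))\<^sup>2) =
     (\<Sum>\<^sub>\<infinity>x\<in>Lay (Suc j) \<inter> D. m x * (cmod (f x))\<^sup>2) + (\<Sum>\<^sub>\<infinity>x\<in>Lay (Suc j) - D. m x * (cmod (f x))\<^sup>2)"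
  proof -
    have "Lay (Suc j) = (Lay (Suc j) \<inter> D) \<union> (Lay (Suc j) - D)" by auto
    hence "(\<Sum>\<^sub>\<infinity>x\<in>Lay (Suc j). m x * (cmod (f x))\<^sup>2) = (\<Sum>\<^sub>\<infinity>x\<in>(Lay (Suc j) \<inter> D) \<union> (Lay (Suc j) - D). m x * (cmod (f x))\<^sup>2)"
      by simp
    also have "\<dots> = (\<Sum>\<^sub>\<infinity>x\<in>Lay (Suc j) \<inter> D. m x * (cmod (f x))\<^sup>2) + (\<Sum>\<^sub>\<infinity>x\<in>Lay (Suc j) - D. m x * (cmod (f x))\<^sup>2)"
      by (rule infsum_Un_disjoint) (auto intro!: gsum_sub[OF f] simp: Lay_sub[THEN subsetD])
    finally show ?thesis .
  qed
  have LD: "(\<Sum>\<^sub>\<infinity>x\<in>Lay (Suc j) \<inter> D. m x * (cmod (f x))\<^sup>2) \<le> (\<Sum>\<^sub>\<infinity>x\<in>D. m x * (cmod (f x))\<^sup>2)"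
    by (rule infsum_mono_neutral) (auto intro!: gsum_sub[OF f] l2_nn simp: DsubX[THEN subsetD] Lay_sub[THEN subsetD])
  show ?thesis using split LD A' by (simp add: c_def)
qed

primrec Cseq :: "nat \<Rightarrow> real" where
  "Cseq 0 = 1"
| "Cseq (Suc j) = 1 + 2 * Mm * R1 * (Dm * Cseq j + 1)"

lemma Cseq_pos: "0 < Cseq j"
  by (induction j) (use Mm_pos R1_pos Dm_pos in \<open>auto intro!: add_pos_nonneg mult_nonneg_nonneg\<close>)

lemma layer_bound:
  assumes f: "l2f f"
  shows "(\<Sum>\<^sub>\<infinity>x\<in>Lay j. m x * (cmod (f x))\<^sup>2) \<le> Cseq j * ((\<Sum>\<^sub>\<infinity>x\<in>X. Efun f x) + (\<Sum>\<^sub>\<infinity>x\<in>D. m x * (cmod (f x))\<^sup>2))"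
proof (induction j)
  case 0
  have "(\<Sum>\<^sub>\<infinity>x\<in>Lay 0. m x * (cmod (f x))\<^sup>2) \<le> (\<Sum>\<^sub>\<infinity>x\<in>D. m x * (cmod (f x))\<^sup>2)"
    by (rule infsum_mono_neutral) (auto intro!: gsum_sub[OF f] l2_nn simp: DsubX[THEN subsetD] Lay0[THEN subsetD] Lay_sub[THEN subsetD])
  thus ?case using Esum_nn[OF f] by simp
next
  case (Suc j)
  define E where "E = (\<Sum>\<^sub>\<infinity>x\<in>X. Efun f x)"
  define N where "N = (\<Sum>\<^sub>\<infinity>x\<in>D. m x * (cmod (f x))\<^sup>2)"
  have E0: "0 \<le> E" unfolding E_def by (rule Esum_nn[OF f])
  have N0: "0 \<le> N" unfolding N_def by (rule gsum_nn[OF DsubX])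
  have c0: "0 \<le> 2 * Mm * R1 * Dm" using Mm_pos R1_pos Dm_pos by simp
  have "(\<Sum>\<^sub>\<infinity>x\<in>Lay (Suc j). m x * (cmod (f x))\<^sup>2) \<le> N + 2 * Mm * R1 * (Dm * (\<Sum>\<^sub>\<infinity>x\<in>Lay j. m x * (cmod (f x))\<^sup>2) + E)"
    using layer_step[OF f, of j] by (simp add: E_def N_def)
  also have "\<dots> \<le> N + 2 * Mm * R1 * (Dm * (Cseq j * (E + N)) + E)"
    using Suc.IH Mm_pos R1_pos Dm_pos by (simp add: E_def N_def mult_left_mono)
  also have "\<dots> \<le> Cseq (Suc j) * (E + N)"
  proof -
    have "N + 2 * Mm * R1 * (Dm * (Cseq j * (E + N)) + E) \<le> (E + N) + 2 * Mm * R1 * (Dm * Cseq j * (E + N) + (E + N))"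
      using E0 N0 Mm_pos R1_pos by (intro add_mono mult_left_mono) (auto simp: mult.assoc)
    also have "\<dots> = Cseq (Suc j) * (E + N)" by (simp add: algebra_simps)
    finally show ?thesis .
  qed
  finally show ?case by (simp add: E_def N_def)
qed

definition "Cp = Cseq K0"

lemma Cp_pos: "0 < Cp" by (simp add: Cp_def Cseq_pos)

lemma poincare:
  assumes f: "l2f f"
  shows "(\<Sum>\<^sub>\<infinity>x\<in>X. m x * (cmod (f x))\<^sup>2) \<le> Cp * ((\<Sum>\<^sub>\<infinity>x\<in>X. Efun f x) + (\<Sum>\<^sub>\<infinity>x\<in>D. m x * (cmod (f x))\<^sup>2))"
  using layer_bound[OF f, of K0] by (simp add: Lay_top Cp_def)

end


lemma ring_helper: "(1 - z) + (x - 1 - (- z)) = (x::'b::{ab_group_add,one})"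
  by (simp add: algebra_simps)

lemma exp_rem:
  fixes Y :: "'b::{real_normed_algebra_1,banach}"
  assumes "norm Y \<le> 1"
  shows "norm (exp Y - 1 - Y) \<le> (norm Y)\<^sup>2"
proof -
  have sY: "summable (\<lambda>n. norm (inverse (fact (n + 2)) *\<^sub>R (Y ^ (n + 2))))"
  proof -
    have "summable (\<lambda>n. norm (Y ^ n /\<^sub>R fact n))" by (rule summable_norm_exp)
    hence "summable (\<lambda>n. norm (Y ^ (n + 2) /\<^sub>R fact (n + 2)))"
      by (rule summable_ignore_initial_segment)
    thus ?thesis by simp
  qed
  have sy: "summable (\<lambda>n. inverse (fact (n + 2)) * (norm Y) ^ (n + 2))"
  proof -
    have "summable (\<lambda>n. (norm Y) ^ n /\<^sub>R fact n)" by (rule summable_exp_generic)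
    hence "summable (\<lambda>n. (norm Y) ^ (n + 2) /\<^sub>R fact (n + 2))"
      by (rule summable_ignore_initial_segment)
    thus ?thesis by (simp add: mult.commute)
  qed
  have "exp Y - 1 - Y = (\<Sum>n. inverse (fact (n + 2)) *\<^sub>R (Y ^ (n + 2)))"
    using exp_first_two_terms[of Y] by simp
  hence "norm (exp Y - 1 - Y) \<le> (\<Sum>n. norm (inverse (fact (n + 2)) *\<^sub>R (Y ^ (n + 2))))"
    using summable_norm[OF sY] by simp
  also have "\<dots> \<le> (\<Sum>n. inverse (fact (n + 2)) * (norm Y) ^ (n + 2))"
  proof (rule suminf_le[OF _ sY sy])
    fix n
    show "norm (inverse (fact (n + 2)) *\<^sub>R (Y ^ (n + 2))) \<le> inverse (fact (n + 2)) * (norm Y) ^ (n + 2)"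
      using norm_power_ineq[of Y "n+2"] by (simp add: mult_left_mono)
  qed
  also have "\<dots> = exp (norm Y) - 1 - norm Y"
    using exp_first_two_terms[of "norm Y"] by simp
  also have "\<dots> \<le> (norm Y)\<^sup>2" using exp_bound[of "norm Y"] assms by simp
  finally show ?thesis .
qed

lemma norm_diff_scale_sq:
  fixes v w :: "'b::real_inner"
  shows "(norm (v - s *\<^sub>R w))\<^sup>2 = (norm v)\<^sup>2 - 2 * s * inner w v + s\<^sup>2 * (norm w)\<^sup>2"
  unfolding power2_norm_eq_inner
  by (simp add: inner_diff_left inner_diff_right inner_commute algebra_simps power2_eq_square)

lemma contraction:
  fixes A :: "'a op"
  assumes c: "0 < c" and co: "\<And>v. c * (norm v)\<^sup>2 \<le> inner (blinfun_apply (opr A) v) v"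
  shows "\<exists>s>0. s * c \<le> 1 \<and> norm (exp ((-s) *\<^sub>R A)) \<le> 1 - s * c / 4"
proof -
  define a where "a = norm A"
  have a0: "0 \<le> a" by (simp add: a_def)
  define s where "s = min (1 / (a + 1)) (min (1 / (c + 1)) (c / (4 * (a\<^sup>2 + 1))))"
  have d0: "0 < 4 * (a\<^sup>2 + 1)" by (simp add: add_nonneg_pos)
  have s0: "0 < s" using a0 c d0 by (simp add: s_def del: distrib_left)
  have s1: "s \<le> 1 / (a + 1)" "s \<le> 1 / (c + 1)" "s \<le> c / (4 * (a\<^sup>2 + 1))" by (simp_all add: s_def)
  have sa: "s * a \<le> 1"
  proof -
    have "s * a \<le> (1 / (a + 1)) * a" using s1(1) a0 by (intro mult_right_mono) auto
    also have "\<dots> \<le> 1" using a0 by (simp add: field_simps)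
    finally show ?thesis .
  qed
  have sc: "s * c \<le> 1"
  proof -
    have "s * c \<le> (1 / (c + 1)) * c" using s1(2) c by (intro mult_right_mono) auto
    also have "\<dots> \<le> 1" using c by (simp add: field_simps)
    finally show ?thesis .
  qed
  have sa2: "s * a\<^sup>2 \<le> c / 4"
  proof -
    have "s * (4 * (a\<^sup>2 + 1)) \<le> c" using s1(3) pos_le_divide_eq[OF d0] by blast
    moreover have "s * (4 * (a\<^sup>2 + 1)) = 4 * (s * (a\<^sup>2 + 1))" by simp
    ultimately have "s * (a\<^sup>2 + 1) \<le> c / 4" by linarith
    moreover have "s * a\<^sup>2 \<le> s * (a\<^sup>2 + 1)" using s0 by simp
    ultimately show ?thesis by linarith
  qed
  have one: "norm (1 - s *\<^sub>R A) \<le> 1 - s * c / 2"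
  proof -
    have "norm (blinfun_apply (opr (1 - s *\<^sub>R A)) v) \<le> (1 - s * c / 2) * norm v" for v
    proof -
      have eqv: "blinfun_apply (opr (1 - s *\<^sub>R A)) v = v - s *\<^sub>R blinfun_apply (opr A) v"
        by (simp add: opr_apply_simps opr_one_apply)
      have Av: "norm (blinfun_apply (opr A) v) \<le> a * norm v" unfolding a_def by (rule opr_apply_bound)
      have "(norm (v - s *\<^sub>R blinfun_apply (opr A) v))\<^sup>2 =
          (norm v)\<^sup>2 - 2 * s * inner (blinfun_apply (opr A) v) v + s\<^sup>2 * (norm (blinfun_apply (opr A) v))\<^sup>2"
        by (rule norm_diff_scale_sq)
      also have "\<dots> \<le> (norm v)\<^sup>2 - 2 * s * (c * (norm v)\<^sup>2) + s\<^sup>2 * (a * norm v)\<^sup>2"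
        using co[of v] s0 Av by (intro add_mono diff_mono mult_left_mono power_mono) auto
      also have "\<dots> = (1 - 2 * s * c + s * (s * a\<^sup>2)) * (norm v)\<^sup>2" by (simp add: algebra_simps power2_eq_square)
      also have "\<dots> \<le> (1 - s * c / 2)\<^sup>2 * (norm v)\<^sup>2"
      proof (rule mult_right_mono)
        have h1: "s * (s * a\<^sup>2) \<le> s * (c / 4)" using sa2 s0 by (intro mult_left_mono) auto
        have h1': "s * (c / 4) = (s * c) / 4" by simp
        have h2: "0 \<le> s * c" using s0 c by simp
        have h3: "(1 - s * c / 2)\<^sup>2 = 1 - s * c + (s * c)\<^sup>2 / 4" by (simp add: power2_eq_square algebra_simps)
        have h4: "0 \<le> (s * c)\<^sup>2 / 4" by simp
        have h5: "2 * s * c = 2 * (s * c)" by simp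
        show "1 - 2 * s * c + s * (s * a\<^sup>2) \<le> (1 - s * c / 2)\<^sup>2"
          unfolding h3 h5 using h1 h1' h2 h4 by linarith
      qed simp
      finally have "(norm (v - s *\<^sub>R blinfun_apply (opr A) v))\<^sup>2 \<le> ((1 - s * c / 2) * norm v)\<^sup>2"
        by (simp add: power_mult_distrib)
      moreover have "0 \<le> (1 - s * c / 2) * norm v" using sc by simp
      ultimately show ?thesis unfolding eqv by (simp add: power2_le_iff_abs_le)
    qed
    thus ?thesis unfolding norm_op_def by (intro norm_blinfun_bound) (use sc in auto)
  qed
  have rem: "norm (exp ((-s) *\<^sub>R A) - 1 - (-s) *\<^sub>R A) \<le> (s * a)\<^sup>2"
    using exp_rem[of "(-s) *\<^sub>R A"] sa s0 by (simp add: a_def)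
  have "norm (exp ((-s) *\<^sub>R A)) = norm ((1 - s *\<^sub>R A) + (exp ((-s) *\<^sub>R A) - 1 - (-s) *\<^sub>R A))"
    unfolding scaleR_minus_left ring_helper ..
  also have "\<dots> \<le> norm (1 - s *\<^sub>R A) + norm (exp ((-s) *\<^sub>R A) - 1 - (-s) *\<^sub>R A)"
    by (rule norm_triangle_ineq)
  also have "\<dots> \<le> 1 - s * c / 2 + (s * a)\<^sup>2" using one rem by simp
  also have "\<dots> \<le> 1 - s * c / 4"
  proof -
    have "(s * a)\<^sup>2 = s * (s * a\<^sup>2)" by (simp add: power2_eq_square)
    also have "\<dots> \<le> s * (c / 4)" using sa2 s0 by (intro mult_left_mono) auto
    finally show ?thesis by simp
  qed
  finally show ?thesis using s0 sc by blast
qed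

lemma exp_nat_scale:
  fixes Y :: "'b::{real_normed_algebra_1,banach}"
  shows "exp (real n *\<^sub>R Y) = exp Y ^ n"
proof (induction n)
  case 0 thus ?case by simp
next
  case (Suc n)
  have "real (Suc n) *\<^sub>R Y = Y + real n *\<^sub>R Y" by (simp add: algebra_simps)
  hence "exp (real (Suc n) *\<^sub>R Y) = exp Y * exp (real n *\<^sub>R Y)"
    by (simp add: exp_add_commuting)
  thus ?case using Suc by simp
qed

lemma exp_power_bound:
  fixes A :: "'a op"
  assumes "norm (exp ((-s) *\<^sub>R A)) \<le> q"
  shows "norm (exp ((-(real n * s)) *\<^sub>R A)) \<le> q ^ n"
proof -
  have "(-(real n * s)) *\<^sub>R A = real n *\<^sub>R ((-s) *\<^sub>R A)"
    by simp
  hence "exp ((-(real n * s)) *\<^sub>R A) = exp ((-s) *\<^sub>R A) ^ n"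
    by (simp only: exp_nat_scale)
  hence "norm (exp ((-(real n * s)) *\<^sub>R A)) \<le> norm (exp ((-s) *\<^sub>R A)) ^ n"
    by (simp add: norm_power_ineq)
  also have "\<dots> \<le> q ^ n" using assms by (intro power_mono) auto
  finally show ?thesis .
qed

lemma decay:
  fixes A :: "'a op"
  assumes c: "0 < c" and co: "\<And>v. c * (norm v)\<^sup>2 \<le> inner (blinfun_apply (opr A) v) v"
    and al: "0 < \<alpha>"
  shows "\<exists>T>0. norm (exp ((-T) *\<^sub>R A)) \<le> \<alpha>"
proof -
  obtain s where s: "s > 0" "s * c \<le> 1" "norm (exp ((-s) *\<^sub>R A)) \<le> 1 - s * c / 4"
    using contraction[OF c co] by blast
  define q where "q = 1 - s * c / 4"
  have q: "0 \<le> q" "q < 1" using s c by (auto simp: q_def)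
  have "(\<lambda>n. q ^ n) \<longlonglongrightarrow> 0" using q by (intro LIMSEQ_power_zero) auto
  hence "eventually (\<lambda>n. q ^ n < \<alpha>) sequentially" using al by (rule order_tendstoD(2))
  then obtain N where N: "\<And>n. n \<ge> N \<Longrightarrow> q ^ n < \<alpha>" by (auto simp: eventually_sequentially)
  define n where "n = Suc N"
  have "norm (exp ((-(real n * s)) *\<^sub>R A)) \<le> q ^ n"
    by (rule exp_power_bound) (use s in \<open>simp add: q_def\<close>)
  also have "\<dots> < \<alpha>" using N[of "Suc N"] by (simp add: n_def)
  finally show ?thesis using s by (intro exI[of _ "real n * s"]) (auto simp: n_def)
qed

context ctrl
begin

definition "Sset = D \<union> - X"
definition "Aop = Hop + Pop Sset"

lemma Aop_apply: "blinfun_apply (opr Aop) v = hfun v + restr Sset v"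
  by (simp add: Aop_def opr_apply_simps Hop_apply Pop_apply)

definition "cc = 1 / (2 * Cp + 1)"

lemma cc_pos: "0 < cc" using Cp_pos by (simp add: cc_def)

lemma coercive: "cc * (norm v)\<^sup>2 \<le> inner (blinfun_apply (opr Aop) v) v"
proof -
  define E where "E = (\<Sum>\<^sub>\<infinity>x\<in>X. Efun (Uinv v) x)"
  define ND where "ND = (\<Sum>\<^sub>\<infinity>x\<in>D. (cmod (vec v x))\<^sup>2)"
  define NO where "NO = (\<Sum>\<^sub>\<infinity>x\<in>-X. (cmod (vec v x))\<^sup>2)"
  define NX where "NX = (\<Sum>\<^sub>\<infinity>x\<in>X. (cmod (vec v x))\<^sup>2)"
  have E0: "0 \<le> E" unfolding E_def by (rule Esum_nn[OF l2f_Uinv])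
  have ND0: "0 \<le> ND" unfolding ND_def by (rule infsum_nonneg) auto
  have NO0: "0 \<le> NO" unfolding NO_def by (rule infsum_nonneg) auto
  have inner_eq: "inner (blinfun_apply (opr Aop) v) v = (1/2) * E + (ND + NO)"
  proof -
    have "inner (blinfun_apply (opr Aop) v) v = inner (hfun v) v + inner (restr Sset v) v"
      by (simp add: Aop_apply inner_add_left)
    also have "inner (restr Sset v) v = ND + NO"
    proof -
      have "inner (restr Sset v) v = (\<Sum>\<^sub>\<infinity>x\<in>D \<union> -X. (cmod (vec v x))\<^sup>2)"
        by (simp add: inner_restr Sset_def)
      also have "\<dots> = ND + NO"
        unfolding ND_def NO_def by (rule infsum_Un_disjoint) (use DsubX in \<open>auto simp: L2_sq_summable\<close>)
      finally show ?thesis .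
    qed
    finally show ?thesis by (simp add: inner_hfun E_def)
  qed
  have nsq: "(norm v)\<^sup>2 = NX + NO" unfolding NX_def NO_def by (rule norm_sq_split)
  have "NX = (\<Sum>\<^sub>\<infinity>x\<in>X. m x * (cmod (Uinv v x))\<^sup>2)"
    unfolding NX_def by (rule infsum_cong) (simp add: Uinv_sq)
  also have "\<dots> \<le> Cp * (E + (\<Sum>\<^sub>\<infinity>x\<in>D. m x * (cmod (Uinv v x))\<^sup>2))"
    unfolding E_def by (rule poincare[OF l2f_Uinv])
  also have "(\<Sum>\<^sub>\<infinity>x\<in>D. m x * (cmod (Uinv v x))\<^sup>2) = ND"
    unfolding ND_def by (rule infsum_cong) (use DsubX in \<open>auto simp: Uinv_sq\<close>)
  finally have NX: "NX \<le> Cp * (E + ND)" .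
  have "(norm v)\<^sup>2 \<le> Cp * (E + ND) + NO" using nsq NX by simp
  also have "\<dots> \<le> (2 * Cp + 1) * ((1/2) * E + (ND + NO))"
    using Cp_pos E0 ND0 NO0 by (simp add: algebra_simps)
  finally have "(norm v)\<^sup>2 \<le> (2 * Cp + 1) * inner (blinfun_apply (opr Aop) v) v"
    by (simp add: inner_eq)
  thus ?thesis using Cp_pos by (simp add: cc_def field_simps)
qed

end


lemma exp_fix:
  fixes Y :: "'a op"
  assumes "blinfun_apply (opr Y) w = 0"
  shows "blinfun_apply (opr (exp (t *\<^sub>R Y))) w = w"
proof -
  have "(\<lambda>n. blinfun_apply (opr ((t *\<^sub>R Y) ^ n /\<^sub>R fact n)) w) sums blinfun_apply (opr (exp (t *\<^sub>R Y))) w"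
    by (rule bounded_linear.sums[OF bounded_linear_opr_apply exp_converges])
  moreover have "blinfun_apply (opr ((t *\<^sub>R Y) ^ n /\<^sub>R fact n)) w = (if n = 0 then w else 0)" for n
  proof (cases n)
    case 0 thus ?thesis by (simp add: opr_one_apply)
  next
    case (Suc k)
    have "blinfun_apply (opr (Y ^ Suc k)) w = 0"
      by (simp only: power_Suc2 opr_mult_apply assms) (simp add: opr_apply_simps blinfun.zero_right)
    thus ?thesis using Suc by (simp add: scaleR_power opr_apply_simps blinfun.zero_right)
  qed
  ultimately have "(\<lambda>n. if n = 0 then w else 0) sums blinfun_apply (opr (exp (t *\<^sub>R Y))) w" by simp
  moreover have "(\<lambda>n. if n = 0 then w else 0) sums w" using sums_single[of 0 "\<lambda>_. w"] by simp
  ultimately show ?thesis using sums_unique2 by blast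
qed

lemma exp_scale_add:
  fixes Y :: "'b::{real_normed_algebra_1,banach}"
  shows "exp (a *\<^sub>R Y) * exp (c *\<^sub>R Y) = exp ((a + c) *\<^sub>R Y)"
  by (simp add: exp_add_commuting[symmetric] scaleR_add_left)

lemma continuous_exp_scale: "continuous_on S (\<lambda>t. exp (t *\<^sub>R (Y::'b::{real_normed_algebra_1,banach})))"
  by (rule continuous_on_vector_derivative) (rule exp_scaleR_has_vector_derivative_right)

context ctrl
begin

lemma Lap_zero_on: "x \<in> X \<Longrightarrow> (\<And>y. y \<in> X \<Longrightarrow> f y = 0) \<Longrightarrow> Lap X b m f x = 0"
proof -
  assume x: "x \<in> X" and f: "\<And>y. y \<in> X \<Longrightarrow> f y = 0"
  have "(\<Sum>\<^sub>\<infinity>y\<in>X. complex_of_real (b x y) * (f x - f y)) = 0"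
    by (rule infsum_0) (simp add: f x)
  thus ?thesis by (simp add: Lap_def)
qed

lemma hfun_out: "(\<And>x. x \<in> X \<Longrightarrow> vec w x = 0) \<Longrightarrow> hfun w = 0"
proof -
  assume w: "\<And>x. x \<in> X \<Longrightarrow> vec w x = 0"
  have "hfun w = U (\<lambda>_. 0)"
    unfolding hfun_def by (rule U_cong) (rule Lap_zero_on, auto simp: Uinv_def w)
  also have "U (\<lambda>_. 0) = 0"
    by (rule L2_eqI) (simp add: vec_U l2f_def)
  finally show ?thesis .
qed

lemma Hop_exp_out:
  assumes "\<And>x. x \<in> X \<Longrightarrow> vec w x = 0"
  shows "blinfun_apply (opr (exp (t *\<^sub>R Hop))) w = w"
  by (rule exp_fix) (simp add: Hop_apply hfun_out assms)

definition g_of :: "'a L2 \<Rightarrow> real \<Rightarrow> 'a L2" where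
  "g_of v0 \<tau> = blinfun_apply (opr (exp ((-\<tau>) *\<^sub>R Aop))) v0"

definition ctl :: "'a L2 \<Rightarrow> real \<Rightarrow> 'a \<Rightarrow> complex" where
  "ctl v0 \<tau> x = - vec (g_of v0 \<tau>) x / complex_of_real (sqrt (m x))"

lemma ext0_ctl_sq: "x \<in> D \<Longrightarrow> m x * (cmod (ext0 D (ctl v0 \<tau>) x))\<^sup>2 = (cmod (vec (g_of v0 \<tau>) x))\<^sup>2"
  using mpos[of x] DsubX by (auto simp: ext0_def ctl_def norm_divide power_divide)

lemma l2f_ext0_ctl: "l2f (ext0 D (ctl v0 \<tau>))"
  unfolding l2f_def
proof (rule summable_on_comparison_test[OF L2_sq_summable[of "g_of v0 \<tau>" X]])
  fix x assume x: "x \<in> X"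
  show "m x * (cmod (ext0 D (ctl v0 \<tau>) x))\<^sup>2 \<le> (cmod (vec (g_of v0 \<tau>) x))\<^sup>2"
    using ext0_ctl_sq[of x v0 \<tau>] by (cases "x \<in> D") (simp_all add: ext0_def)
  show "0 \<le> m x * (cmod (ext0 D (ctl v0 \<tau>) x))\<^sup>2" using l2_nn x by blast
qed

lemma U_ext0_ctl: "U (ext0 D (ctl v0 \<tau>)) = - restr D (g_of v0 \<tau>)"
proof (rule L2_eqI)
  fix x
  show "vec (U (ext0 D (ctl v0 \<tau>))) x = vec (- restr D (g_of v0 \<tau>)) x"
    unfolding vec_U[OF l2f_ext0_ctl] using mpos[of x] DsubX
    by (auto simp: vec_restr ext0_def ctl_def)
qed

lemma restr_split: "restr Sset w = restr D w + restr (-X) w"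
  by (rule L2_eqI) (use DsubX in \<open>auto simp: vec_restr Sset_def\<close>)

lemma duhamel:
  assumes f0: "l2f f0" and x: "x \<in> X" and T0: "0 \<le> T"
  shows "mild_sol X b m D f0 (ctl (U f0)) T x = vec (g_of (U f0) T) x / complex_of_real (sqrt (m x))"
proof -
  define v0 where "v0 = U f0"
  define C where "C = exp ((-T) *\<^sub>R Hop)"
  define f1 where "f1 \<tau> = C * exp (\<tau> *\<^sub>R Hop)" for \<tau>
  define g1 where "g1 \<tau> = exp (\<tau> *\<^sub>R (- Aop))" for \<tau>
  define \<Psi>' where "\<Psi>' \<tau> = f1 \<tau> * ((- Aop) * g1 \<tau>) + C * (exp (\<tau> *\<^sub>R Hop) * Hop) * g1 \<tau>" for \<tau>
  have dPsi: "((\<lambda>\<tau>. f1 \<tau> * g1 \<tau>) has_vector_derivative \<Psi>' \<tau>) (at \<tau> within S)" for \<tau> S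
  proof -
    have d1: "(f1 has_vector_derivative C * (exp (\<tau> *\<^sub>R Hop) * Hop)) (at \<tau> within S)"
      unfolding f1_def by (intro has_vector_derivative_mult_right exp_scaleR_has_vector_derivative_right)
    have d2: "(g1 has_vector_derivative (- Aop) * g1 \<tau>) (at \<tau> within S)"
      unfolding g1_def by (rule has_vector_derivative_at_within[OF exp_scaleR_has_vector_derivative_left])
    show ?thesis unfolding \<Psi>'_def by (rule has_vector_derivative_mult[OF d1 d2])
  qed
  have Psi'_eq: "\<Psi>' \<tau> = - (exp ((\<tau> - T) *\<^sub>R Hop) * Pop Sset * g1 \<tau>)" for \<tau>
  proof -
    have "C * exp (\<tau> *\<^sub>R Hop) = exp ((\<tau> - T) *\<^sub>R Hop)"
      unfolding C_def exp_scale_add by (simp add: algebra_simps)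
    moreover have "\<Psi>' \<tau> = C * exp (\<tau> *\<^sub>R Hop) * (Hop - Aop) * g1 \<tau>"
      unfolding \<Psi>'_def f1_def by (simp add: algebra_simps)
    moreover have "Hop - Aop = - Pop Sset" by (simp add: Aop_def)
    ultimately show ?thesis by simp
  qed
  have g1_g: "blinfun_apply (opr (g1 \<tau>)) v0 = g_of v0 \<tau>" for \<tau>
    by (simp add: g1_def g_of_def)
  define F where "F \<tau> = ev v0 x (f1 \<tau> * g1 \<tau>)" for \<tau>
  define ff where "ff \<tau> = ev v0 x (\<Psi>' \<tau>)" for \<tau>
  have dF: "(F has_vector_derivative ff \<tau>) (at \<tau> within S)" for \<tau> S
    unfolding F_def ff_def by (rule bounded_linear.has_vector_derivative[OF bounded_linear_ev dPsi])
  have ff_eq: "ff \<tau> = heat_sg X b m (T - \<tau>) (ext0 D (ctl v0 \<tau>)) x" for \<tau>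
  proof -
    define w where "w = g_of v0 \<tau>"
    have out: "blinfun_apply (opr (exp ((\<tau> - T) *\<^sub>R Hop))) (restr (-X) w) = restr (-X) w"
      by (rule Hop_exp_out) (simp add: vec_restr)
    have "ff \<tau> = - ev v0 x (exp ((\<tau> - T) *\<^sub>R Hop) * Pop Sset * g1 \<tau>)"
      unfolding ff_def Psi'_eq by (simp add: ev_def opr_apply_simps)
    also have "ev v0 x (exp ((\<tau> - T) *\<^sub>R Hop) * Pop Sset * g1 \<tau>) =
        vec (blinfun_apply (opr (exp ((\<tau> - T) *\<^sub>R Hop))) (restr D w)) x / complex_of_real (sqrt (m x))"
      unfolding ev_def opr_mult_apply g1_g Pop_apply restr_split w_def[symmetric]
      using x by (simp add: blinfun.add_right out vec_restr)
    also have "\<dots> = - ev (U (ext0 D (ctl v0 \<tau>))) x (exp ((-(T - \<tau>)) *\<^sub>R Hop))"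
      unfolding ev_def U_ext0_ctl w_def by (simp add: blinfun.minus_right)
    also have "\<dots> = - heat_sg X b m (T - \<tau>) (ext0 D (ctl v0 \<tau>)) x"
      by (simp add: heat_eq[OF l2f_ext0_ctl x])
    finally show ?thesis by simp
  qed
  have cont: "continuous_on {0..T} ff"
  proof -
    have "continuous_on {0..T} \<Psi>'"
      unfolding \<Psi>'_def f1_def g1_def
      by (intro continuous_intros continuous_exp_scale)
    thus ?thesis unfolding ff_def by (rule bounded_linear.continuous_on[OF bounded_linear_ev])
  qed
  have ftc: "interval_lebesgue_integral lborel (ereal 0) (ereal T) ff = F T - F 0"
    by (rule interval_integral_FTC_finite) (use cont dF T0 in auto)
  have FT: "F T = vec (g_of v0 T) x / complex_of_real (sqrt (m x))"
  proof -
    have "f1 T * g1 T = exp (T *\<^sub>R (- Aop))"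
      unfolding f1_def C_def g1_def exp_scale_add by simp
    thus ?thesis unfolding F_def ev_def g_of_def by simp
  qed
  have F0: "F 0 = heat_sg X b m T f0 x"
    unfolding F_def f1_def g1_def C_def v0_def by (simp add: heat_eq[OF f0 x])
  have "mild_sol X b m D f0 (ctl v0) T x = F 0 + (LINT \<tau>:{0<..<T}|lborel. ff \<tau>)"
    unfolding mild_sol_def F0 ff_eq ..
  also have "(LINT \<tau>:{0<..<T}|lborel. ff \<tau>) = interval_lebesgue_integral lborel (ereal 0) (ereal T) ff"
    using T0 by (simp add: interval_lebesgue_integral_def)
  finally show ?thesis using ftc FT by (simp add: v0_def)
qed

end


lemma enn_powr_le:
  assumes "I \<le> ennreal y" "0 \<le> y" "0 \<le> q"
  shows "enn_powr I q \<le> ennreal (y powr q)"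
proof -
  have nt: "I \<noteq> \<infinity>"
  proof
    assume "I = \<infinity>"
    with assms(1) have "\<infinity> \<le> ennreal y" by simp
    hence "ennreal y = \<infinity>" using top_unique by (metis infinity_ennreal_def)
    thus False by simp
  qed
  have "enn2real I \<le> enn2real (ennreal y)"
    by (rule enn2real_mono[OF assms(1)]) simp
  hence le: "enn2real I \<le> y" using assms(2) by simp
  have "enn2real I powr q \<le> y powr q" by (rule powr_mono2) (use assms le in auto)
  thus ?thesis using nt by (simp add: enn_powr_def)
qed

lemma enn_powr_ennreal: "0 \<le> x \<Longrightarrow> enn_powr (ennreal x) q = ennreal (x powr q)"
  by (simp add: enn_powr_def)

lemma powr_max_bound:
  fixes T p :: real
  assumes "0 \<le> T" "1 \<le> p"
  shows "T powr (1 / p) \<le> max 1 T"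
proof (cases "T \<le> 1")
  case True
  hence "T powr (1 / p) \<le> 1" using powr_le1[of "1 / p" T] assms by auto
  thus ?thesis by simp
next
  case False
  hence "T powr (1 / p) \<le> T powr 1" using assms by (intro powr_mono) auto
  thus ?thesis using False by simp
qed

context ctrl
begin

lemma continuous_g: "continuous_on S (g_of v0)"
proof -
  have "continuous_on S (\<lambda>\<tau>. exp (\<tau> *\<^sub>R (- Aop)))" by (rule continuous_exp_scale)
  hence "continuous_on S (\<lambda>\<tau>. blinfun_apply (opr (exp (\<tau> *\<^sub>R (- Aop)))) v0)"
    by (rule bounded_linear.continuous_on[OF bounded_linear_opr_apply])
  thus ?thesis unfolding g_of_def by simp
qed

lemma norm_g: "norm (g_of v0 \<tau>) \<le> exp (\<bar>\<tau>\<bar> * norm Aop) * norm v0"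
proof -
  have "norm (g_of v0 \<tau>) \<le> norm (exp ((-\<tau>) *\<^sub>R Aop)) * norm v0"
    unfolding g_of_def by (rule opr_apply_bound)
  also have "\<dots> \<le> exp (norm ((-\<tau>) *\<^sub>R Aop)) * norm v0"
    by (intro mult_right_mono norm_exp) auto
  finally show ?thesis by simp
qed

lemma ctl_sq: "x \<in> D \<Longrightarrow> m x * (cmod (ctl v0 \<tau> x))\<^sup>2 = (cmod (vec (g_of v0 \<tau>) x))\<^sup>2"
  using mpos[of x] DsubX by (auto simp: ctl_def norm_divide power_divide)

lemma l2norm_ctl: "l2norm m D (ctl v0 \<tau>) = ennreal (norm (restr D (g_of v0 \<tau>)))"
proof -
  have S: "(\<lambda>x. m x * (cmod (ctl v0 \<tau> x))\<^sup>2) summable_on D"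
  proof -
    have "(\<lambda>x. m x * (cmod (ctl v0 \<tau> x))\<^sup>2) summable_on D \<longleftrightarrow> (\<lambda>x. (cmod (vec (g_of v0 \<tau>) x))\<^sup>2) summable_on D"
      by (rule summable_on_cong) (rule ctl_sq)
    thus ?thesis using L2_sq_summable by blast
  qed
  have "l2norm m D (ctl v0 \<tau>) = ennreal (sqrt (\<Sum>\<^sub>\<infinity>x\<in>D. m x * (cmod (ctl v0 \<tau> x))\<^sup>2))"
    by (rule l2norm_eq[OF DsubX S])
  also have "(\<Sum>\<^sub>\<infinity>x\<in>D. m x * (cmod (ctl v0 \<tau> x))\<^sup>2) = (norm (restr D (g_of v0 \<tau>)))\<^sup>2"
    unfolding norm_restr_sq by (rule infsum_cong) (rule ctl_sq)
  finally show ?thesis by simp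
qed

lemma meas_ctl: "(\<lambda>\<tau>. ctl v0 \<tau> x) \<in> borel_measurable lborel"
proof -
  have "continuous_on UNIV (\<lambda>\<tau>. ctl v0 \<tau> x)"
    unfolding ctl_def divide_inverse by (intro continuous_intros continuous_g)
  thus ?thesis by (simp add: borel_measurable_continuous_onI)
qed

lemma Lr_bound:
  assumes T: "0 < T" and r: "1 \<le> r" and B: "\<And>\<tau>. \<tau> \<in> {0<..<T} \<Longrightarrow> norm (restr D (g_of v0 \<tau>)) \<le> Bd" and B0: "0 \<le> Bd"
  shows "Lr_norm r T (\<lambda>\<tau>. l2norm m D (ctl v0 \<tau>)) \<le> ennreal (Bd * max 1 T)"
proof (cases "r = \<infinity>")
  case True
  define M where "M = restrict_space lborel {0<..<T}"
  have meas: "(\<lambda>\<tau>. ennreal (norm (restr D (g_of v0 \<tau>)))) \<in> borel_measurable M"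
  proof -
    have "continuous_on UNIV (\<lambda>\<tau>. norm (restr D (g_of v0 \<tau>)))"
      by (intro continuous_on_norm bounded_linear.continuous_on[OF bounded_linear_restr] continuous_g)
    hence "(\<lambda>\<tau>. norm (restr D (g_of v0 \<tau>))) \<in> borel_measurable borel"
      by (rule borel_measurable_continuous_onI)
    hence "(\<lambda>\<tau>. ennreal (norm (restr D (g_of v0 \<tau>)))) \<in> borel_measurable lborel"
      by simp
    thus ?thesis unfolding M_def by (rule measurable_restrict_space1)
  qed
  have "esssup M (\<lambda>\<tau>. ennreal (norm (restr D (g_of v0 \<tau>)))) \<le> ennreal Bd"
  proof (rule esssup_I[OF meas])
    show "AE \<tau> in M. ennreal (norm (restr D (g_of v0 \<tau>))) \<le> ennreal Bd"
      by (rule AE_I2) (auto simp: M_def space_restrict_space intro!: ennreal_leI B)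
  qed
  also have "ennreal Bd \<le> ennreal (Bd * max 1 T)"
    using B0 by (intro ennreal_leI) (simp add: mult_le_cancel_left1)
  finally show ?thesis using True unfolding Lr_norm_def M_def by (simp add: l2norm_ctl)
next
  case False
  define p where "p = enn2real r"
  have p1: "1 \<le> p"
  proof -
    have "enn2real 1 \<le> enn2real r" by (rule enn2real_mono[OF r]) (use False in \<open>simp add: top.not_eq_extremum\<close>)
    thus ?thesis by (simp add: p_def)
  qed
  have pt: "enn_powr (l2norm m D (ctl v0 \<tau>)) p * indicator {0<..<T} \<tau> \<le> ennreal (Bd powr p) * indicator {0<..<T} \<tau>" for \<tau>
  proof (cases "\<tau> \<in> {0<..<T}")
    case True
    have "enn_powr (l2norm m D (ctl v0 \<tau>)) p \<le> ennreal (Bd powr p)"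
      unfolding l2norm_ctl by (rule enn_powr_le) (use B[OF True] B0 p1 in auto)
    thus ?thesis using True by simp
  qed simp
  have "(\<integral>\<^sup>+\<tau>. enn_powr (l2norm m D (ctl v0 \<tau>)) p * indicator {0<..<T} \<tau> \<partial>lborel) \<le>
        (\<integral>\<^sup>+\<tau>. ennreal (Bd powr p) * indicator {0<..<T} \<tau> \<partial>lborel)"
    by (rule nn_integral_mono) (rule pt)
  also have "\<dots> = ennreal (Bd powr p) * ennreal T"
    using T by (simp add: nn_integral_cmult_indicator)
  also have "\<dots> = ennreal (Bd powr p * T)" using T by (simp add: ennreal_mult)
  finally have I: "(\<integral>\<^sup>+\<tau>\<in>{0<..<T}. enn_powr (l2norm m D (ctl v0 \<tau>)) p \<partial>lborel) \<le> ennreal (Bd powr p * T)" .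
  have "Lr_norm r T (\<lambda>\<tau>. l2norm m D (ctl v0 \<tau>)) = enn_powr (\<integral>\<^sup>+\<tau>\<in>{0<..<T}. enn_powr (l2norm m D (ctl v0 \<tau>)) p \<partial>lborel) (1 / p)"
    using False by (simp add: Lr_norm_def p_def)
  also have "\<dots> \<le> ennreal ((Bd powr p * T) powr (1 / p))"
    by (rule enn_powr_le[OF I]) (use T B0 p1 in auto)
  also have "(Bd powr p * T) powr (1 / p) = Bd * T powr (1 / p)"
    using B0 T p1 by (simp add: powr_mult powr_powr powr_one)
  also have "ennreal (Bd * T powr (1 / p)) \<le> ennreal (Bd * max 1 T)"
    using B0 powr_max_bound[of T p] T p1 by (intro ennreal_leI mult_left_mono) auto
  finally show ?thesis .
qed

lemma ctrl_main:
  assumes al: "0 < \<alpha>" and r: "1 \<le> r"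
  shows "\<exists>T>0. \<exists>K\<ge>0. controllable X b m D \<alpha> T r K"
proof -
  obtain T where T: "T > 0" "norm (exp ((-T) *\<^sub>R Aop)) \<le> \<alpha>"
    using decay[OF cc_pos coercive al] by blast
  define K where "K = exp (T * norm Aop) * max 1 T"
  have K0: "0 \<le> K" by (simp add: K_def)
  have "controllable X b m D \<alpha> T r K"
    unfolding controllable_def
  proof (intro allI impI)
    fix f0 assume "in_l2 m X f0"
    hence f0: "l2f f0" using in_l2_iff[of X f0] by (simp add: l2f_def)
    define v0 where "v0 = U f0"
    have lf0: "l2norm m X f0 = ennreal (norm v0)" unfolding v0_def by (rule l2norm_U[OF f0])
    show "\<exists>u. (\<forall>x\<in>D. (\<lambda>\<tau>. u \<tau> x) \<in> borel_measurable lborel) \<and>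
           Lr_norm r T (\<lambda>\<tau>. l2norm m D (u \<tau>)) \<le> ennreal K * l2norm m X f0 \<and>
           l2norm m X (mild_sol X b m D f0 u T) \<le> ennreal \<alpha> * l2norm m X f0"
    proof (intro exI[of _ "ctl v0"] conjI ballI)
      fix x assume "x \<in> D"
      show "(\<lambda>\<tau>. ctl v0 \<tau> x) \<in> borel_measurable lborel" by (rule meas_ctl)
    next
      define Bd where "Bd = exp (T * norm Aop) * norm v0"
      have B: "norm (restr D (g_of v0 \<tau>)) \<le> Bd" if "\<tau> \<in> {0<..<T}" for \<tau>
      proof -
        have "norm (restr D (g_of v0 \<tau>)) \<le> norm (g_of v0 \<tau>)" by (rule norm_restr_le)
        also have "\<dots> \<le> exp (\<bar>\<tau>\<bar> * norm Aop) * norm v0" by (rule norm_g)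
        also have "\<dots> \<le> Bd" unfolding Bd_def using that
          by (intro mult_right_mono) (auto intro!: mult_right_mono)
        finally show ?thesis .
      qed
      have "Lr_norm r T (\<lambda>\<tau>. l2norm m D (ctl v0 \<tau>)) \<le> ennreal (Bd * max 1 T)"
        by (rule Lr_bound[OF T(1) r B]) (auto simp: Bd_def)
      also have "Bd * max 1 T = K * norm v0" by (simp add: Bd_def K_def)
      also have "ennreal (K * norm v0) = ennreal K * l2norm m X f0"
        using K0 by (simp add: lf0 ennreal_mult)
      finally show "Lr_norm r T (\<lambda>\<tau>. l2norm m D (ctl v0 \<tau>)) \<le> ennreal K * l2norm m X f0" .
    next
      define ms where "ms = mild_sol X b m D f0 (ctl v0) T"
      have msx: "ms x = vec (g_of v0 T) x / complex_of_real (sqrt (m x))" if "x \<in> X" for x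
        unfolding ms_def v0_def by (rule duhamel[OF f0 that]) (use T in simp)
      have sq: "m x * (cmod (ms x))\<^sup>2 = (cmod (vec (g_of v0 T) x))\<^sup>2" if "x \<in> X" for x
        using msx[OF that] mpos[OF that] by (simp add: norm_divide power_divide)
      have S: "(\<lambda>x. m x * (cmod (ms x))\<^sup>2) summable_on X"
      proof -
        have "(\<lambda>x. m x * (cmod (ms x))\<^sup>2) summable_on X \<longleftrightarrow> (\<lambda>x. (cmod (vec (g_of v0 T) x))\<^sup>2) summable_on X"
          by (rule summable_on_cong) (rule sq)
        thus ?thesis using L2_sq_summable by blast
      qed
      have "l2norm m X ms = ennreal (sqrt (\<Sum>\<^sub>\<infinity>x\<in>X. m x * (cmod (ms x))\<^sup>2))"
        by (rule l2norm_eq[OF _ S]) simp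
      also have "(\<Sum>\<^sub>\<infinity>x\<in>X. m x * (cmod (ms x))\<^sup>2) = (norm (restr X (g_of v0 T)))\<^sup>2"
        unfolding norm_restr_sq by (rule infsum_cong) (rule sq)
      also have "ennreal (sqrt ((norm (restr X (g_of v0 T)))\<^sup>2)) \<le> ennreal (norm (g_of v0 T))"
        using norm_restr_le[of X "g_of v0 T"] by simp
      also have "norm (g_of v0 T) \<le> \<alpha> * norm v0"
      proof -
        have "norm (g_of v0 T) \<le> norm (exp ((-T) *\<^sub>R Aop)) * norm v0"
          unfolding g_of_def by (rule opr_apply_bound)
        also have "\<dots> \<le> \<alpha> * norm v0" using T(2) by (intro mult_right_mono) auto
        finally show ?thesis .
      qed
      hence "ennreal (norm (g_of v0 T)) \<le> ennreal (\<alpha> * norm v0)" by (rule ennreal_leI)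
      also have "\<dots> = ennreal \<alpha> * l2norm m X f0" using al by (simp add: lf0 ennreal_mult)
      finally show "l2norm m X (mild_sol X b m D f0 (ctl v0) T) \<le> ennreal \<alpha> * l2norm m X f0"
        by (simp add: ms_def)
    qed
  qed
  thus ?thesis using T(1) K0 by blast
qed

end

theorem mainTheorem1:
  fixes X :: "'a set" and b :: "'a \<Rightarrow> 'a \<Rightarrow> real" and m :: "'a \<Rightarrow> real"
    and D :: "'a set" and \<alpha> :: real and r :: ennreal
  assumes "weighted_graph X b m"
    and "graph_connected X b"
    and "bounded_degree X b m"
    and "bounded_measure X m"
    and "D \<subset> X"
    and "relatively_dense X (dL X b) D"
    and "\<alpha> > 0"
    and "1 \<le> r"
  shows "\<exists>T>0. \<exists>K\<ge>0. controllable X b m D \<alpha> T r K"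
proof -
  interpret ctrl X b m D
    by (unfold_locales) (use assms in auto)
  show ?thesis by (rule ctrl_main) (use assms in auto)
qed


end
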